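(* Let $G(\lambda)\in\mathbb F(\lambda)^{p\times m}$, let $L(\lambda)$ be a strong block minimal bases linearization of $G(\lambda)$ as in the context, with transfer function matrix $\widehat G(\lambda)=\begin{bmatrix} M(\lambda)+\widehat K_2^TC(\lambda I_n-A)^{-1}B\widehat K_1 & K_2(\lambda)^T\\ K_1(\lambda) & 0\end{bmatrix}$. (a) If $h(\lambda)\in\mathcal N_r(G(\lambda))$ then $z(\lambda)=\begin{bmatrix}N_1(\lambda)^T\\ -\widehat N_2(\lambda)M(\lambda)N_1(\lambda)^T\end{bmatrix}h(\lambda)\in\mathcal N_r(\widehat G(\lambda))$. Moreover, if $h(\lambda)\ne0$ is a vector polynomial, then $z(\lambda)$ is a vector polynomial and $\deg z(\lambda)=\deg(N_1(\lambda)^Th(\lambda))=\deg N_1(\lambda)+\deg h(\lambda)$. (b) If $\{h_1(\lambda),\dots,h_l(\lambda)\}$ is a right minimal basis of $G(\lambda)$, then $\left\{\begin{bmatrix}N_1(\lambda)^T\\ -\widehat N_2(\lambda)M(\lambda)N_1(\lambda)^T\end{bmatrix}h_j(\lambda)\right\}_{j=1}^l$ is a right minimal basis of $\widehat G(\lambda)$.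
   Context: $\mathbb F$ is an arbitrary field. A polynomial matrix $K\in\mathbb F[\lambda]^{a\times b}$, $a<b$, is a minimal basis if its rows form a minimal basis (polynomial basis of least total degree) of the subspace of $\mathbb F(\lambda)^b$ they span; $K\in\mathbb F[\lambda]^{a_1\times b}$, $N\in\mathbb F[\lambda]^{a_2\times b}$ are dual minimal bases if both are minimal bases, $a_1+a_2=b$ and $KN^T=0$. Strong block minimal bases linearization: write $G=D+C(\lambda I_n-A)^{-1}B$ with $D$ the polynomial part, $\deg D>1$, and $C(\lambda I_n-A)^{-1}B$ a minimal order state-space realization of the strictly proper part ($n$ minimal). Let $K_1\in\mathbb F[\lambda]^{\widehat m\times(m+\widehat m)}$, $K_2\in\mathbb F[\lambda]^{\widehat p\times(p+\widehat p)}$ be minimal bases with all row degrees $1$, $N_1\in\mathbb F[\lambda]^{m\times(m+\widehat m)}$, $N_2\in\mathbb F[\lambda]^{p\times(p+\widehat p)}$ minimal bases dual to $K_1,K_2$ respectively, each with all its row degrees equal, and $M(\lambda)\in\mathbb F[\lambda]^{(p+\widehat p)\times(m+\widehat m)}$ a pencil with $D=N_2MN_1^T$ and $\deg D=\deg N_1+\deg N_2+1$. Let $\widehat K_1\in\mathbb F^{m\times(m+\widehat m)}$, $\widehat K_2\in\mathbb F^{p\times(p+\widehat p)}$, $\widehat N_1\in\mathbb F[\lambda]^{\widehat m\times(m+\widehat m)}$, $\widehat N_2\in\mathbb F[\lambda]^{\widehat p\times(p+\widehat p)}$ be such that $U_i=\begin{bmatrix}K_i\\ \widehat K_i\end{bmatrix}$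 is unimodular with $U_i^{-1}=\begin{bmatrix}\widehat N_i^T & N_i^T\end{bmatrix}$, $i=1,2$. For nonsingular $T,S\in\mathbb F^{n\times n}$, $L(\lambda)=\begin{bmatrix}T(\lambda I_n-A)S & TB\widehat K_1 & 0\\ -\widehat K_2^TCS & M(\lambda) & K_2(\lambda)^T\\ 0 & K_1(\lambda) & 0\end{bmatrix}$. A right minimal basis of a rational matrix $G$ is a polynomial matrix (or set of vectors) whose columns form a minimal basis of $\mathcal N_r(G)=\{x:Gx=0\}$. *)

theory Defs
  imports "HOL-Computational_Algebra.Polynomial" "HOL-Computational_Algebra.Fraction_Field" "Jordan_Normal_Form.Gauss_Jordan_Elimination"
begin

text \<open>Rational functions over the field 'a are the type ('a poly) fract.
  Polynomial matrices are 'a poly mat, rational matrices are ('a poly fract) mat,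
  constant matrices are 'a mat.\<close>

type_synonym 'a rat_fun = "'a poly fract"

definition embp :: "'a::field poly mat \<Rightarrow> 'a rat_fun mat" where
  "embp P = map_mat (\<lambda>x. Fract x 1) P"

definition embpv :: "'a::field poly vec \<Rightarrow> 'a rat_fun vec" where
  "embpv v = map_vec (\<lambda>x. Fract x 1) v"

definition constp :: "'a::field mat \<Rightarrow> 'a poly mat" where
  "constp A = map_mat (\<lambda>c. [:c:]) A"

definition embc :: "'a::field mat \<Rightarrow> 'a rat_fun mat" where
  "embc A = embp (constp A)"

definition mat_deg :: "'a::zero poly mat \<Rightarrow> nat" where
  "mat_deg P = Max (insert 0 {degree (P $$ (i,j)) | i j. i < dim_row P \<and> j < dim_col P})"

definition vec_deg :: "'a::zero poly vec \<Rightarrow> nat" where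
  "vec_deg v = Max (insert 0 {degree (v $ i) | i. i < dim_vec v})"

definition row_deg :: "'a::zero poly mat \<Rightarrow> nat \<Rightarrow> nat" where
  "row_deg P i = vec_deg (row P i)"

definition col_deg :: "'a::zero poly mat \<Rightarrow> nat \<Rightarrow> nat" where
  "col_deg P j = vec_deg (col P j)"

definition poly_col_basis :: "nat \<Rightarrow> 'a::field poly mat \<Rightarrow> 'a rat_fun vec set \<Rightarrow> bool" where
  "poly_col_basis d H V \<longleftrightarrow> dim_row H = d \<and>
     (\<forall>c \<in> carrier_vec (dim_col H). embp H *\<^sub>v c = 0\<^sub>v d \<longrightarrow> c = 0\<^sub>v (dim_col H)) \<and>
     V = {embp H *\<^sub>v c | c. c \<in> carrier_vec (dim_col H)}"

definition minimal_col_basis :: "nat \<Rightarrow> 'a::field poly mat \<Rightarrow> 'a rat_fun vec set \<Rightarrow> bool" where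
  "minimal_col_basis d H V \<longleftrightarrow> poly_col_basis d H V \<and>
     (\<forall>H'. poly_col_basis d H' V \<longrightarrow> (\<Sum>j<dim_col H. col_deg H j) \<le> (\<Sum>j<dim_col H'. col_deg H' j))"

definition minimal_basis :: "'a::field poly mat \<Rightarrow> bool" where
  "minimal_basis K \<longleftrightarrow> minimal_col_basis (dim_col K) (transpose_mat K)
      {embp (transpose_mat K) *\<^sub>v c | c. c \<in> carrier_vec (dim_row K)}"

definition dual_minimal_bases :: "'a::field poly mat \<Rightarrow> 'a poly mat \<Rightarrow> bool" where
  "dual_minimal_bases K N \<longleftrightarrow> minimal_basis K \<and> minimal_basis N \<and>
     dim_col K = dim_col N \<and> dim_row K + dim_row N = dim_col K \<and>
     K * transpose_mat N = 0\<^sub>m (dim_row K) (dim_row N)"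

definition rnull :: "'a::field rat_fun mat \<Rightarrow> 'a rat_fun vec set" where
  "rnull G = {x \<in> carrier_vec (dim_col G). G *\<^sub>v x = 0\<^sub>v (dim_row G)}"

definition right_minimal_basis :: "'a::field poly mat \<Rightarrow> 'a rat_fun mat \<Rightarrow> bool" where
  "right_minimal_basis H G \<longleftrightarrow> minimal_col_basis (dim_col G) H (rnull G)"

definition lamI_minus :: "'a::field mat \<Rightarrow> 'a rat_fun mat" where
  "lamI_minus A = embp (mat (dim_row A) (dim_row A)
       (\<lambda>(i,j). [:- (A $$ (i,j)), (if i = j then 1 else 0):]))"

definition resolvent :: "'a::field mat \<Rightarrow> 'a rat_fun mat" where
  "resolvent A = the (mat_inverse (lamI_minus A))"

definition state_space :: "'a::field mat \<Rightarrow> 'a mat \<Rightarrow> 'a mat \<Rightarrow> 'a rat_fun mat" where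
  "state_space A B C = embc C * resolvent A * embc B"

definition minimal_realization :: "nat \<Rightarrow> nat \<Rightarrow> nat \<Rightarrow> 'a::field mat \<Rightarrow> 'a mat \<Rightarrow> 'a mat \<Rightarrow> bool" where
  "minimal_realization n p m A B C \<longleftrightarrow>
     A \<in> carrier_mat n n \<and> B \<in> carrier_mat n m \<and> C \<in> carrier_mat p n \<and>
     (\<forall>n' A' B' C'. A' \<in> carrier_mat n' n' \<and> B' \<in> carrier_mat n' m \<and> C' \<in> carrier_mat p n' \<and>
        state_space A' B' C' = state_space A B C \<longrightarrow> n \<le> n')"

definition unimodular_with_inverse :: "'a::field poly mat \<Rightarrow> 'a poly mat \<Rightarrow> bool" where
  "unimodular_with_inverse U V \<longleftrightarrow> (\<exists>k. U \<in> carrier_mat k k \<and> V \<in> carrier_mat k k \<and>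
     U * V = 1\<^sub>m k \<and> V * U = 1\<^sub>m k)"

end

theory Submission
  imports Defs "Jordan_Normal_Form.Char_Poly"
begin

interpretation fr: inj_comm_ring_hom "\<lambda>x::'a::idom. Fract x 1"
  by unfold_locales (auto simp: One_fract_def Zero_fract_def eq_fract)
interpretation cp: inj_comm_ring_hom "\<lambda>x::'a::comm_ring_1. [:x:]"
  by unfold_locales (auto simp: one_pCons)

section \<open>Embedding lemmas\<close>

lemma embp_carrier[simp]: "(embp A \<in> carrier_mat n k) = (A \<in> carrier_mat n k)"
  unfolding embp_def carrier_mat_def by auto
lemma embp_dims[simp]: "dim_row (embp A) = dim_row A" "dim_col (embp A) = dim_col A"
  unfolding embp_def by auto
lemma embpv_carrier[simp]: "(embpv v \<in> carrier_vec n) = (v \<in> carrier_vec n)"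
  unfolding embpv_def carrier_vec_def by auto
lemma embpv_dim[simp]: "dim_vec (embpv v) = dim_vec v"
  unfolding embpv_def by auto
lemma constp_carrier[simp]: "(constp A \<in> carrier_mat n k) = (A \<in> carrier_mat n k)"
  unfolding constp_def carrier_mat_def by auto
lemma constp_dims[simp]: "dim_row (constp A) = dim_row A" "dim_col (constp A) = dim_col A"
  unfolding constp_def by auto
lemma embc_carrier[simp]: "(embc A \<in> carrier_mat n k) = (A \<in> carrier_mat n k)"
  unfolding embc_def by auto

lemma embp_mult: "A \<in> carrier_mat n k \<Longrightarrow> B \<in> carrier_mat k l \<Longrightarrow> embp (A * B) = embp A * embp (B::'a::field poly mat)"
  unfolding embp_def by (rule fr.mat_hom_mult)
lemma constp_mult: "A \<in> carrier_mat n k \<Longrightarrow> B \<in> carrier_mat k l \<Longrightarrow> constp (A * B) = constp A * constp (B::'a::field mat)"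
  unfolding constp_def by (rule cp.mat_hom_mult)
lemma embp_mult_vec: "A \<in> carrier_mat n k \<Longrightarrow> v \<in> carrier_vec k \<Longrightarrow> embpv (A *\<^sub>v v) = embp A *\<^sub>v embpv (v::'a::field poly vec)"
  unfolding embp_def embpv_def by (rule fr.mult_mat_vec_hom)
lemma embp_add: "A \<in> carrier_mat n k \<Longrightarrow> B \<in> carrier_mat n k \<Longrightarrow> embp (A + B) = embp A + embp (B::'a::field poly mat)"
  unfolding embp_def by (intro eq_matI) auto
lemma embp_uminus: "embp (- A) = - embp (A::'a::field poly mat)"
  unfolding embp_def by (intro eq_matI) auto
lemma embp_zero[simp]: "embp (0\<^sub>m n k :: 'a::field poly mat) = 0\<^sub>m n k"
  unfolding embp_def by (intro eq_matI) (auto simp: fr.hom_zero)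
lemma embp_one[simp]: "embp (1\<^sub>m n :: 'a::field poly mat) = 1\<^sub>m n"
  unfolding embp_def by (intro eq_matI) (auto simp: fr.hom_one fr.hom_zero)
lemma embpv_zero[simp]: "embpv (0\<^sub>v n :: 'a::field poly vec) = 0\<^sub>v n"
  unfolding embpv_def by (intro eq_vecI) (auto simp: fr.hom_zero)
lemma embpv_zero_iff[simp]: "(embpv v = 0\<^sub>v n) = (v = (0\<^sub>v n :: 'a::field poly vec))"
  unfolding embpv_def by (rule fr.vec_hom_zero_iff)
lemma embpv_inj: "embpv v = embpv w \<Longrightarrow> v = (w :: 'a::field poly vec)"
  unfolding embpv_def by (rule fr.vec_hom_inj)
lemma embp_transpose: "embp (transpose_mat A) = transpose_mat (embp (A::'a::field poly mat))"
  unfolding embp_def by (intro eq_matI) (auto simp: fr.hom_zero)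
lemma constp_transpose: "constp (transpose_mat A) = transpose_mat (constp (A::'a::field mat))"
  unfolding constp_def by (intro eq_matI) auto
lemma embp_append_rows: "A \<in> carrier_mat n1 k \<Longrightarrow> B \<in> carrier_mat n2 k \<Longrightarrow>
   embp (A @\<^sub>r B) = embp A @\<^sub>r embp (B::'a::field poly mat)"
  unfolding embp_def append_rows_def by (intro eq_matI) auto
lemma embpv_append: "embpv (v @\<^sub>v w) = embpv v @\<^sub>v embpv (w::'a::field poly vec)"
  unfolding embpv_def by (intro eq_vecI) (auto simp: fr.hom_zero)
lemma embpv_uminus: "embpv (- v) = - embpv (v::'a::field poly vec)"
  unfolding embpv_def by (intro eq_vecI) auto
lemma embpv_index: "i < dim_vec v \<Longrightarrow> embpv v $ i = Fract (v $ i) 1"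
  unfolding embpv_def by auto
lemma embp_col: "j < dim_col A \<Longrightarrow> embpv (col A j) = col (embp A) j"
  unfolding embpv_def embp_def by (intro eq_vecI) auto

section \<open>Degree lemmas\<close>

lemma vec_deg_le_iff: "vec_deg v \<le> k \<longleftrightarrow> (\<forall>i < dim_vec v. degree (v $ i) \<le> k)"
proof -
  have fin: "finite {degree (v $ i) | i. i < dim_vec v}" by simp
  show ?thesis unfolding vec_deg_def using Max_le_iff[of "insert 0 {degree (v $ i) | i. i < dim_vec v}" k] fin
    by auto
qed

lemma degree_le_vec_deg: "i < dim_vec v \<Longrightarrow> degree (v $ i) \<le> vec_deg v"
  using vec_deg_le_iff[of v "vec_deg v"] by auto

lemma vec_deg_attained: assumes "v \<noteq> 0\<^sub>v (dim_vec v)"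
  shows "\<exists>i < dim_vec v. v $ i \<noteq> 0 \<and> degree (v $ i) = vec_deg v"
proof -
  let ?S = "insert 0 {degree (v $ i) | i. i < dim_vec v}"
  have fin: "finite ?S" by simp
  have "vec_deg v \<in> ?S" unfolding vec_deg_def by (rule Max_in[OF fin], auto)
  show ?thesis
  proof (cases "vec_deg v = 0")
    case True
    have "\<not> (\<forall>i < dim_vec v. v $ i = 0)"
    proof
      assume "\<forall>i < dim_vec v. v $ i = 0"
      hence "v = 0\<^sub>v (dim_vec v)" by (intro eq_vecI) auto
      with assms show False by simp
    qed
    then obtain i where i: "i < dim_vec v" "v $ i \<noteq> 0" by auto
    with degree_le_vec_deg[OF i(1)] True show ?thesis by auto
  next
    case False
    with \<open>vec_deg v \<in> ?S\<close> obtain i where i: "i < dim_vec v" "degree (v $ i) = vec_deg v" by auto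
    with False have "v $ i \<noteq> 0" by auto
    with i show ?thesis by auto
  qed
qed

lemma mat_deg_le_iff: "mat_deg A \<le> k \<longleftrightarrow> (\<forall>i < dim_row A. \<forall>j < dim_col A. degree (A $$ (i,j)) \<le> k)"
proof -
  have fin: "finite {degree (A $$ (i,j)) | i j. i < dim_row A \<and> j < dim_col A}"
  proof -
    have "{degree (A $$ (i,j)) | i j. i < dim_row A \<and> j < dim_col A} = (\<lambda>(i,j). degree (A $$ (i,j))) ` ({..<dim_row A} \<times> {..<dim_col A})"
      by auto
    thus ?thesis by simp
  qed
  show ?thesis unfolding mat_deg_def using Max_le_iff[of "insert 0 {degree (A $$ (i,j)) | i j. i < dim_row A \<and> j < dim_col A}" k] fin
    by auto
qed

lemma degree_le_mat_deg: "i < dim_row A \<Longrightarrow> j < dim_col A \<Longrightarrow> degree (A $$ (i,j)) \<le> mat_deg A"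
  using mat_deg_le_iff[of A "mat_deg A"] by auto

lemma vec_deg_append: "vec_deg (v @\<^sub>v w) = max (vec_deg v) (vec_deg w)"
proof (rule antisym)
  show "vec_deg (v @\<^sub>v w) \<le> max (vec_deg v) (vec_deg w)"
    unfolding vec_deg_le_iff
  proof (intro allI impI)
    fix i assume i: "i < dim_vec (v @\<^sub>v w)"
    show "degree ((v @\<^sub>v w) $ i) \<le> max (vec_deg v) (vec_deg w)"
    proof (cases "i < dim_vec v")
      case True
      thus ?thesis using degree_le_vec_deg[of i v] by (simp add: index_append_vec)
    next
      case False
      hence "i - dim_vec v < dim_vec w" using i by auto
      thus ?thesis using degree_le_vec_deg[of "i - dim_vec v" w] False by (simp add: index_append_vec)
    qed
  qed
  have "vec_deg v \<le> vec_deg (v @\<^sub>v w)" unfolding vec_deg_le_iff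
  proof (intro allI impI)
    fix i assume i: "i < dim_vec v"
    hence "degree ((v @\<^sub>v w) $ i) \<le> vec_deg (v @\<^sub>v w)" by (intro degree_le_vec_deg) auto
    thus "degree (v $ i) \<le> vec_deg (v @\<^sub>v w)" using i by (simp add: index_append_vec)
  qed
  moreover have "vec_deg w \<le> vec_deg (v @\<^sub>v w)" unfolding vec_deg_le_iff
  proof (intro allI impI)
    fix i assume i: "i < dim_vec w"
    hence "degree ((v @\<^sub>v w) $ (dim_vec v + i)) \<le> vec_deg (v @\<^sub>v w)" by (intro degree_le_vec_deg) auto
    thus "degree (w $ i) \<le> vec_deg (v @\<^sub>v w)" using i by (simp add: index_append_vec)
  qed
  ultimately show "max (vec_deg v) (vec_deg w) \<le> vec_deg (v @\<^sub>v w)" by auto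
qed

lemma vec_deg_uminus[simp]: "vec_deg (- v) = vec_deg (v :: 'a::comm_ring poly vec)"
proof (rule antisym)
  show "vec_deg (- v) \<le> vec_deg v" unfolding vec_deg_le_iff using degree_le_vec_deg[of _ v] by auto
  show "vec_deg v \<le> vec_deg (- v)" unfolding vec_deg_le_iff using degree_le_vec_deg[of _ "- v"] by auto
qed

lemma vec_deg_add: "dim_vec v = dim_vec w \<Longrightarrow> vec_deg (v + w) \<le> max (vec_deg v) (vec_deg (w :: 'a::comm_ring poly vec))"
  unfolding vec_deg_le_iff using degree_le_vec_deg[of _ v] degree_le_vec_deg[of _ w]
  by (auto intro!: degree_add_le) (meson le_max_iff_disj)+

lemma vec_deg_mult: assumes "A \<in> carrier_mat n k" "v \<in> carrier_vec k"
  shows "vec_deg (A *\<^sub>v v) \<le> mat_deg A + vec_deg (v :: 'a::field poly vec)"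
  unfolding vec_deg_le_iff
proof (intro allI impI)
  fix i assume i: "i < dim_vec (A *\<^sub>v v)"
  have "(A *\<^sub>v v) $ i = (\<Sum>j<k. A $$ (i,j) * v $ j)" using assms i
    by (auto simp: scalar_prod_def intro: sum.cong)
  also have "degree \<dots> \<le> mat_deg A + vec_deg v"
  proof (rule degree_sum_le, simp)
    fix j assume j: "j \<in> {..<k}"
    have "degree (A $$ (i,j) * v $ j) \<le> degree (A $$ (i,j)) + degree (v $ j)" by (rule degree_mult_le)
    also have "\<dots> \<le> mat_deg A + vec_deg v" using degree_le_mat_deg[of i A j] degree_le_vec_deg[of j v] assms i j
      by (intro add_mono) auto
    finally show "degree (A $$ (i,j) * v $ j) \<le> mat_deg A + vec_deg v" .
  qed
  finally show "degree ((A *\<^sub>v v) $ i) \<le> mat_deg A + vec_deg v" .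
qed

lemma mat_deg_mult: assumes "A \<in> carrier_mat n k" "B \<in> carrier_mat k l"
  shows "mat_deg (A * B) \<le> mat_deg A + mat_deg (B :: 'a::field poly mat)"
  unfolding mat_deg_le_iff
proof (intro allI impI)
  fix i j assume i: "i < dim_row (A * B)" and j: "j < dim_col (A * B)"
  have "(A * B) $$ (i,j) = (\<Sum>r<k. A $$ (i,r) * B $$ (r,j))" using assms i j
    by (auto simp: scalar_prod_def intro: sum.cong)
  also have "degree \<dots> \<le> mat_deg A + mat_deg B"
  proof (rule degree_sum_le, simp)
    fix r assume r: "r \<in> {..<k}"
    have "degree (A $$ (i,r) * B $$ (r,j)) \<le> degree (A $$ (i,r)) + degree (B $$ (r,j))" by (rule degree_mult_le)
    also have "\<dots> \<le> mat_deg A + mat_deg B" using degree_le_mat_deg[of i A r] degree_le_mat_deg[of r B j] assms i j r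
      by (intro add_mono) auto
    finally show "degree (A $$ (i,r) * B $$ (r,j)) \<le> mat_deg A + mat_deg B" .
  qed
  finally show "degree ((A * B) $$ (i,j)) \<le> mat_deg A + mat_deg B" .
qed

lemma mat_deg_constp[simp]: "mat_deg (constp A) = 0"
  using mat_deg_le_iff[of "constp A" 0] by (auto simp: constp_def)

lemma mult_entry: "A \<in> carrier_mat n k \<Longrightarrow> B \<in> carrier_mat k l \<Longrightarrow> i < n \<Longrightarrow> j < l \<Longrightarrow>
  (A * B) $$ (i,j) = (\<Sum>t<k. A $$ (i,t) * B $$ (t,j))"
  by (auto simp: scalar_prod_def intro: sum.cong)

lemma sum_split_nat: "(\<Sum>t<(r::nat)+s. f t) = (\<Sum>t<r. f t) + (\<Sum>t<s. (f (r + t) :: 'b::comm_monoid_add))"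
proof -
  have "(\<Sum>t<r+s. f t) = sum f {0..<r} + sum f {r..<r+s}"
    by (simp add: lessThan_atLeast0 sum.atLeastLessThan_concat)
  also have "sum f {r..<r+s} = sum f {0+r..<s+r}" by (simp add: add.commute)
  also have "\<dots> = (\<Sum>t\<in>{0..<s}. f (t + r))" by (rule sum.shift_bounds_nat_ivl)
  finally show ?thesis by (simp add: lessThan_atLeast0 add.commute)
qed

lemma unimod_blocks:
  fixes K Kh Nh N :: "'a::field poly mat"
  assumes K: "K \<in> carrier_mat r c" and Kh: "Kh \<in> carrier_mat s c"
    and Nh: "Nh \<in> carrier_mat r c" and N: "N \<in> carrier_mat s c"
    and U: "unimodular_with_inverse (K @\<^sub>r Kh) (transpose_mat (Nh @\<^sub>r N))"
  shows "K * transpose_mat N = 0\<^sub>m r s" "K * transpose_mat Nh = 1\<^sub>m r"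
    "Kh * transpose_mat N = 1\<^sub>m s" "Kh * transpose_mat Nh = 0\<^sub>m s r"
    "transpose_mat Nh * K + transpose_mat N * Kh = 1\<^sub>m c" "c = r + s"
proof -
  let ?U = "K @\<^sub>r Kh" and ?V = "transpose_mat (Nh @\<^sub>r N)"
  from U obtain k where Uk: "?U \<in> carrier_mat k k" and Vk: "?V \<in> carrier_mat k k"
    and UV: "?U * ?V = 1\<^sub>m k" and VU: "?V * ?U = 1\<^sub>m k"
    unfolding unimodular_with_inverse_def by auto
  have Uc: "?U \<in> carrier_mat (r+s) c" using K Kh by auto
  have Vc: "?V \<in> carrier_mat c (r+s)" using Nh N by auto
  from Uk Uc Vk Vc have kk: "k = r + s" "c = r + s" unfolding carrier_mat_def by auto
  show "c = r + s" by fact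
  have Ui1: "?U $$ (i,t) = K $$ (i,t)" if "i < r" "t < c" for i t
    using that K Kh by (simp add: append_rows_def)
  have Ui2: "?U $$ (r+i,t) = Kh $$ (i,t)" if "i < s" "t < c" for i t
    using that K Kh by (simp add: append_rows_def)
  have Vi1: "?V $$ (t,i) = Nh $$ (i,t)" if "i < r" "t < c" for i t
    using that Nh N by (simp add: append_rows_def)
  have Vi2: "?V $$ (t,r+i) = N $$ (i,t)" if "i < s" "t < c" for i t
    using that Nh N by (simp add: append_rows_def)
  have UVe: "(\<Sum>t<c. ?U $$ (i,t) * ?V $$ (t,j)) = (if i = j then 1 else 0)" if "i < r+s" "j < r+s" for i j
    using mult_entry[OF Uc Vc that] UV kk that by simp
  have VUe: "(\<Sum>t<r+s. ?V $$ (i,t) * ?U $$ (t,j)) = (if i = j then 1 else 0)" if "i < c" "j < c" for i j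
    using mult_entry[OF Vc Uc that] VU kk that by simp
  show "K * transpose_mat N = 0\<^sub>m r s"
  proof (rule eq_matI)
    fix i j assume ij: "i < dim_row (0\<^sub>m r s :: 'a poly mat)" "j < dim_col (0\<^sub>m r s :: 'a poly mat)"
    hence "(K * transpose_mat N) $$ (i,j) = (\<Sum>t<c. ?U $$ (i,t) * ?V $$ (t,r+j))"
      using K N by (subst mult_entry[of _ r c _ s]) (auto intro!: sum.cong simp: Ui1 Vi2)
    also have "\<dots> = 0" using UVe[of i "r+j"] ij by auto
    finally show "(K * transpose_mat N) $$ (i,j) = 0\<^sub>m r s $$ (i,j)" using ij by simp
  qed (use K N in auto)
  show "K * transpose_mat Nh = 1\<^sub>m r"
  proof (rule eq_matI)
    fix i j assume ij: "i < dim_row (1\<^sub>m r :: 'a poly mat)" "j < dim_col (1\<^sub>m r :: 'a poly mat)"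
    hence "(K * transpose_mat Nh) $$ (i,j) = (\<Sum>t<c. ?U $$ (i,t) * ?V $$ (t,j))"
      using K Nh by (subst mult_entry[of _ r c _ r]) (auto intro!: sum.cong simp: Ui1 Vi1)
    also have "\<dots> = (if i = j then 1 else 0)" using UVe[of i j] ij by auto
    finally show "(K * transpose_mat Nh) $$ (i,j) = 1\<^sub>m r $$ (i,j)" using ij by simp
  qed (use K Nh in auto)
  show "Kh * transpose_mat N = 1\<^sub>m s"
  proof (rule eq_matI)
    fix i j assume ij: "i < dim_row (1\<^sub>m s :: 'a poly mat)" "j < dim_col (1\<^sub>m s :: 'a poly mat)"
    hence "(Kh * transpose_mat N) $$ (i,j) = (\<Sum>t<c. ?U $$ (r+i,t) * ?V $$ (t,r+j))"
      using Kh N by (subst mult_entry[of _ s c _ s]) (auto intro!: sum.cong simp: Ui2 Vi2)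
    also have "\<dots> = (if i = j then 1 else 0)" using UVe[of "r+i" "r+j"] ij by auto
    finally show "(Kh * transpose_mat N) $$ (i,j) = 1\<^sub>m s $$ (i,j)" using ij by simp
  qed (use Kh N in auto)
  show "Kh * transpose_mat Nh = 0\<^sub>m s r"
  proof (rule eq_matI)
    fix i j assume ij: "i < dim_row (0\<^sub>m s r :: 'a poly mat)" "j < dim_col (0\<^sub>m s r :: 'a poly mat)"
    hence "(Kh * transpose_mat Nh) $$ (i,j) = (\<Sum>t<c. ?U $$ (r+i,t) * ?V $$ (t,j))"
      using Kh Nh by (subst mult_entry[of _ s c _ r]) (auto intro!: sum.cong simp: Ui2 Vi1)
    also have "\<dots> = 0" using UVe[of "r+i" j] ij by auto
    finally show "(Kh * transpose_mat Nh) $$ (i,j) = 0\<^sub>m s r $$ (i,j)" using ij by simp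
  qed (use Kh Nh in auto)
  show "transpose_mat Nh * K + transpose_mat N * Kh = 1\<^sub>m c"
  proof (rule eq_matI)
    fix i j assume ij: "i < dim_row (1\<^sub>m c :: 'a poly mat)" "j < dim_col (1\<^sub>m c :: 'a poly mat)"
    have "(transpose_mat Nh * K + transpose_mat N * Kh) $$ (i,j) =
       (transpose_mat Nh * K) $$ (i,j) + (transpose_mat N * Kh) $$ (i,j)"
      using ij K Kh Nh N by simp
    also have "(transpose_mat Nh * K) $$ (i,j) = (\<Sum>t<r. ?V $$ (i,t) * ?U $$ (t,j))"
      using K Nh ij by (subst mult_entry[of _ c r _ c]) (auto intro!: sum.cong simp: Ui1 Vi1)
    also have "(transpose_mat N * Kh) $$ (i,j) = (\<Sum>t<s. ?V $$ (i,r+t) * ?U $$ (r+t,j))"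
      using Kh N ij by (subst mult_entry[of _ c s _ c]) (auto intro!: sum.cong simp: Ui2 Vi2)
    also have "(\<Sum>t<r. ?V $$ (i,t) * ?U $$ (t,j)) + (\<Sum>t<s. ?V $$ (i,r+t) * ?U $$ (r+t,j))
       = (\<Sum>t<r+s. ?V $$ (i,t) * ?U $$ (t,j))" by (rule sum_split_nat[symmetric])
    also have "\<dots> = (if i = j then 1 else 0)" using VUe[of i j] ij by auto
    finally show "(transpose_mat Nh * K + transpose_mat N * Kh) $$ (i,j) = 1\<^sub>m c $$ (i,j)" using ij by simp
  qed (use K Nh N Kh in auto)
qed

lemma coeff_mult_top: assumes "degree p \<le> a" "degree q \<le> b"
  shows "coeff (p * q) (a + b) = coeff p a * coeff q (b :: nat)"
proof (cases "degree p = a \<and> degree q = b")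
  case True thus ?thesis using coeff_mult_degree_sum[of p q] by simp
next
  case False
  hence lt: "degree p < a \<or> degree q < b" using assms by auto
  hence "coeff p a * coeff q b = 0" by (auto simp: coeff_eq_0)
  moreover have "degree (p * q) < a + b" using degree_mult_le[of p q] lt assms by linarith
  hence "coeff (p * q) (a + b) = 0" by (simp add: coeff_eq_0)
  ultimately show ?thesis by simp
qed

lemma coeff_mult_const: "coeff (p * [:a:]) n = coeff p n * (a :: 'a :: comm_semiring_1)"
  by (simp add: mult.commute[of p] mult.commute[of a])

lemma degree_le_pred: assumes "degree p \<le> d" "coeff p d = 0" "d > 0" shows "degree p \<le> d - 1"
proof (rule ccontr)
  assume "\<not> ?thesis"
  hence "degree p = d" using assms by auto
  with assms have "p = 0" by (metis leading_coeff_0_iff)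
  with \<open>degree p = d\<close> assms show False by simp
qed

definition phimat :: "nat \<Rightarrow> nat \<Rightarrow> 'b::field vec \<Rightarrow> 'b mat" where
  "phimat k i0 w = mat k k (\<lambda>(i,j). if j = i0 then w $ i else if i = j then 1 else 0)"

lemma phimat_carrier[simp]: "phimat k i0 w \<in> carrier_mat k k"
  unfolding phimat_def by auto

lemma phimat_dims[simp]: "dim_row (phimat k i0 w) = k" "dim_col (phimat k i0 w) = k"
  unfolding phimat_def by auto

lemma phimat_apply: assumes x: "x \<in> carrier_vec k" and i: "i < k" and i0: "i0 < k"
  shows "(phimat k i0 w *\<^sub>v x) $ i = w $ i * x $ i0 + (if i = i0 then 0 else x $ i)"
proof -
  have "(phimat k i0 w *\<^sub>v x) $ i = (\<Sum>j<k. (if j = i0 then w $ i else if i = j then 1 else 0) * x $ j)"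
    using x i unfolding phimat_def by (auto simp: scalar_prod_def intro: sum.cong)
  also have "\<dots> = (\<Sum>j<k. (if j = i0 then w $ i * x $ j else 0) + (if j \<noteq> i0 \<and> i = j then x $ j else 0))"
    by (rule sum.cong) auto
  also have "\<dots> = w $ i * x $ i0 + (\<Sum>j<k. if j \<noteq> i0 \<and> i = j then x $ j else 0)"
    using i0 by (simp add: sum.distrib)
  also have "(\<Sum>j<k. if j \<noteq> i0 \<and> i = j then x $ j else 0) = (if i = i0 then 0 else x $ i)"
  proof (cases "i = i0")
    case True thus ?thesis by (simp, intro sum.neutral) auto
  next
    case False
    have "(\<Sum>j<k. if j \<noteq> i0 \<and> i = j then x $ j else 0) = (\<Sum>j<k. if i = j then x $ j else 0)"
      using False by (intro sum.cong) auto
    also have "\<dots> = x $ i" using i by simp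
    finally show ?thesis using False by simp
  qed
  finally show ?thesis .
qed

lemma phimat_inj: assumes x: "x \<in> carrier_vec k" and i0: "i0 < k" and w: "w $ i0 = 1"
  and z: "phimat k i0 w *\<^sub>v x = 0\<^sub>v k" shows "x = 0\<^sub>v k"
proof -
  have x0: "x $ i0 = 0" using phimat_apply[OF x i0 i0, of w] z w i0 by simp
  show ?thesis
  proof (rule eq_vecI)
    fix i assume "i < dim_vec (0\<^sub>v k :: 'a vec)"
    hence i: "i < k" by simp
    show "x $ i = 0\<^sub>v k $ i"
      using phimat_apply[OF x i i0, of w] z i x0 by (cases "i = i0") auto
  qed (use x in auto)
qed

lemma phimat_surj: assumes y: "y \<in> carrier_vec k" and i0: "i0 < k" and w: "w $ i0 = 1"
  shows "\<exists>x \<in> carrier_vec k. phimat k i0 w *\<^sub>v x = y"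
proof -
  let ?x = "vec k (\<lambda>i. if i = i0 then y $ i0 else y $ i - y $ i0 * w $ i)"
  have x: "?x \<in> carrier_vec k" by simp
  have "phimat k i0 w *\<^sub>v ?x = y"
  proof (rule eq_vecI)
    fix i assume "i < dim_vec y"
    hence i: "i < k" using y by simp
    show "(phimat k i0 w *\<^sub>v ?x) $ i = y $ i"
      using phimat_apply[OF x i i0, of w] i i0 w by (cases "i = i0") (auto simp: algebra_simps)
  qed (use y in auto)
  with x show ?thesis by blast
qed

lemma embc_phimat: "w \<in> carrier_vec k \<Longrightarrow> embc (phimat k i0 w) = phimat k i0 (map_vec (\<lambda>a. Fract [:a:] 1) w)"
  unfolding embc_def embp_def constp_def phimat_def
  by (intro eq_matI) (auto simp: fr.hom_one fr.hom_zero)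

lemma pcb_transform:
  fixes H :: "'a::field poly mat" and T :: "'a mat"
  assumes pcb: "poly_col_basis c H V" and H: "H \<in> carrier_mat c k" and T: "T \<in> carrier_mat k k"
    and inj: "\<And>x. x \<in> carrier_vec k \<Longrightarrow> embc T *\<^sub>v x = 0\<^sub>v k \<Longrightarrow> x = 0\<^sub>v k"
    and surj: "\<And>y. y \<in> carrier_vec k \<Longrightarrow> \<exists>x \<in> carrier_vec k. embc T *\<^sub>v x = y"
  shows "poly_col_basis c (H * constp T) V"
proof -
  have e: "embp (H * constp T) = embp H * embc T" unfolding embc_def
    by (rule embp_mult[OF H, of "constp T" k]) (use T in simp)
  have eH: "embp H \<in> carrier_mat c k" and eT: "embc T \<in> carrier_mat k k" using H T by auto
  from pcb H have indH: "\<And>x. x \<in> carrier_vec k \<Longrightarrow> embp H *\<^sub>v x = 0\<^sub>v c \<Longrightarrow> x = 0\<^sub>v k"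
    and VH: "V = {embp H *\<^sub>v x | x. x \<in> carrier_vec k}" unfolding poly_col_basis_def by auto
  have dims: "dim_row (H * constp T) = c" "dim_col (H * constp T) = k" using H T by auto
  show ?thesis unfolding poly_col_basis_def dims
  proof (intro conjI ballI impI)
    fix x :: "'a rat_fun vec" assume x: "x \<in> carrier_vec k" and z: "embp (H * constp T) *\<^sub>v x = 0\<^sub>v c"
    hence "embp H *\<^sub>v (embc T *\<^sub>v x) = 0\<^sub>v c" unfolding e using eH eT by simp
    hence "embc T *\<^sub>v x = 0\<^sub>v k" using indH eT x by simp
    thus "x = 0\<^sub>v k" using inj x by simp
  next
    show "V = {embp (H * constp T) *\<^sub>v x |x. x \<in> carrier_vec k}"
    proof (unfold VH, intro equalityI subsetI)
      fix v assume "v \<in> {embp H *\<^sub>v x |x. x \<in> carrier_vec k}"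
      then obtain y where y: "y \<in> carrier_vec k" and v: "v = embp H *\<^sub>v y" by auto
      from surj[OF y] obtain x where x: "x \<in> carrier_vec k" and xy: "embc T *\<^sub>v x = y" by auto
      have "v = embp (H * constp T) *\<^sub>v x" unfolding e v xy[symmetric] using eH eT x by simp
      with x show "v \<in> {embp (H * constp T) *\<^sub>v x |x. x \<in> carrier_vec k}" by blast
    next
      fix v assume "v \<in> {embp (H * constp T) *\<^sub>v x |x. x \<in> carrier_vec k}"
      then obtain x where x: "x \<in> carrier_vec k" and v: "v = embp (H * constp T) *\<^sub>v x" by auto
      have "v = embp H *\<^sub>v (embc T *\<^sub>v x)" unfolding v e using eH eT x by simp
      moreover have "embc T *\<^sub>v x \<in> carrier_vec k" using eT x by simp
      ultimately show "v \<in> {embp H *\<^sub>v x |x. x \<in> carrier_vec k}" by blast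
    qed
  qed (simp)
qed

lemma mult_vec_entry: "A \<in> carrier_mat n k \<Longrightarrow> v \<in> carrier_vec k \<Longrightarrow> i < n \<Longrightarrow>
  (A *\<^sub>v v) $ i = (\<Sum>t<k. A $$ (i,t) * v $ t)"
  by (auto simp: scalar_prod_def intro: sum.cong)

lemma col_deg_transpose: "j < dim_row N \<Longrightarrow> col_deg (transpose_mat N) j = row_deg N j"
  unfolding col_deg_def row_deg_def by simp

lemma row_deg_entries: assumes N: "N \<in> carrier_mat k c" and rd: "\<forall>i<k. row_deg N i = d"
  and i: "i < k" and j: "j < c" shows "degree (N $$ (i,j)) \<le> d"
proof -
  have "degree (row N i $ j) \<le> vec_deg (row N i)" using N j by (intro degree_le_vec_deg) auto
  thus ?thesis using rd i j N unfolding row_deg_def by auto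
qed

lemma PD_lead:
  fixes N :: "'a::field poly mat"
  assumes N: "N \<in> carrier_mat k c" and mb: "minimal_basis N" and rd: "\<forall>i<k. row_deg N i = d"
    and u: "u \<in> carrier_vec k"
    and z: "transpose_mat (mat k c (\<lambda>(i,j). coeff (N $$ (i,j)) d)) *\<^sub>v u = 0\<^sub>v c"
  shows "u = 0\<^sub>v k"
proof (rule ccontr)
  assume un: "u \<noteq> 0\<^sub>v k"
  let ?Nl = "mat k c (\<lambda>(i,j). coeff (N $$ (i,j)) d)"
  let ?NT = "transpose_mat N"
  let ?V = "{embp ?NT *\<^sub>v x | x. x \<in> carrier_vec k}"
  have NT: "?NT \<in> carrier_mat c k" using N by simp
  from mb N have pcb: "poly_col_basis c ?NT ?V"
    and mini: "\<And>H'. poly_col_basis c H' ?V \<Longrightarrow> (\<Sum>j<k. col_deg ?NT j) \<le> (\<Sum>j<dim_col H'. col_deg H' j)"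
    unfolding minimal_basis_def minimal_col_basis_def by auto
  from pcb have ind: "\<And>x. x \<in> carrier_vec k \<Longrightarrow> embp ?NT *\<^sub>v x = 0\<^sub>v c \<Longrightarrow> x = 0\<^sub>v k"
    using N unfolding poly_col_basis_def by auto
  have degN: "\<And>i j. i < k \<Longrightarrow> j < c \<Longrightarrow> degree (N $$ (i,j)) \<le> d"
    using row_deg_entries[OF N rd] by auto
  have key: "degree ((?NT *\<^sub>v map_vec (\<lambda>a. [:a:]) w) $ j) \<le> d \<and> coeff ((?NT *\<^sub>v map_vec (\<lambda>a. [:a:]) w) $ j) d = 0"
    if w: "w \<in> carrier_vec k" and wz: "transpose_mat ?Nl *\<^sub>v w = 0\<^sub>v c" and j: "j < c" for w j
  proof -
    have e: "(?NT *\<^sub>v map_vec (\<lambda>a. [:a:]) w) $ j = (\<Sum>t<k. N $$ (t,j) * [:w $ t:])"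
      using mult_vec_entry[OF NT _ j, of "map_vec (\<lambda>a. [:a:]) w"] w N j by simp
    have "degree (\<Sum>t<k. N $$ (t,j) * [:w $ t:]) \<le> d"
    proof (rule degree_sum_le, simp)
      fix t assume "t \<in> {..<k}"
      hence "degree (N $$ (t,j)) \<le> d" using degN j by auto
      thus "degree (N $$ (t,j) * [:w $ t:]) \<le> d" using degree_mult_le[of "N $$ (t,j)" "[:w $ t:]"] by simp
    qed
    moreover have "coeff (\<Sum>t<k. N $$ (t,j) * [:w $ t:]) d = (\<Sum>t<k. coeff (N $$ (t,j)) d * w $ t)"
      by (subst coeff_sum) (rule sum.cong[OF refl], rule coeff_mult_const)
    moreover have "(transpose_mat ?Nl *\<^sub>v w) $ j = (\<Sum>t<k. coeff (N $$ (t,j)) d * w $ t)"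
      using mult_vec_entry[of "transpose_mat ?Nl" c k w j] w j by (auto intro: sum.cong)
    ultimately show ?thesis using e wz j by simp
  qed
  have "\<not> (\<forall>i<k. u $ i = 0)"
  proof
    assume "\<forall>i<k. u $ i = 0"
    hence "u = 0\<^sub>v k" using u by (intro eq_vecI) auto
    with un show False by simp
  qed
  then obtain i0 where i0: "i0 < k" "u $ i0 \<noteq> 0" by auto
  show False
  proof (cases "d = 0")
    case True
    let ?cu = "map_vec (\<lambda>a. [:a:]) u"
    have y0: "?NT *\<^sub>v ?cu = 0\<^sub>v c"
    proof (rule eq_vecI)
      fix j assume "j < dim_vec (0\<^sub>v c :: 'a poly vec)"
      hence j: "j < c" by simp
      from key[OF u z j] True have "degree ((?NT *\<^sub>v ?cu) $ j) = 0" "coeff ((?NT *\<^sub>v ?cu) $ j) 0 = 0" by auto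
      hence "coeff ((?NT *\<^sub>v ?cu) $ j) (degree ((?NT *\<^sub>v ?cu) $ j)) = 0" by simp
      hence "(?NT *\<^sub>v ?cu) $ j = 0" by simp
      thus "(?NT *\<^sub>v ?cu) $ j = 0\<^sub>v c $ j" using j by simp
    qed (use N in simp)
    have cu: "?cu \<in> carrier_vec k" using u by simp
    have "embp ?NT *\<^sub>v embpv ?cu = 0\<^sub>v c"
      using embp_mult_vec[OF NT cu] y0 by simp
    hence "embpv ?cu = 0\<^sub>v k" by (intro ind) (use cu in simp)
    hence "?cu = 0\<^sub>v k" by simp
    hence "u = 0\<^sub>v k" by (simp add: cp.vec_hom_zero_iff)
    with un show False by simp
  next
    case False
    hence d0: "d > 0" by simp
    define w where "w = (1 / u $ i0) \<cdot>\<^sub>v u"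
    have w: "w \<in> carrier_vec k" unfolding w_def using u by simp
    have wi0: "w $ i0 = 1" unfolding w_def using i0 u by simp
    have Nl: "transpose_mat ?Nl \<in> carrier_mat c k" by simp
    have wz: "transpose_mat ?Nl *\<^sub>v w = 0\<^sub>v c" unfolding w_def mult_mat_vec[OF Nl u] z
      by (intro eq_vecI) auto
    define T where "T = phimat k i0 w"
    have T: "T \<in> carrier_mat k k" unfolding T_def by simp
    let ?w' = "map_vec (\<lambda>a. Fract [:a:] 1) w"
    have eT: "embc T = phimat k i0 ?w'" unfolding T_def by (rule embc_phimat[OF w])
    have w'i0: "?w' $ i0 = 1" using wi0 w i0 by (simp add: fr.hom_one)
    define H' where "H' = ?NT * constp T"
    have H': "H' \<in> carrier_mat c k" unfolding H'_def using NT T by simp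
    have pcb': "poly_col_basis c H' ?V" unfolding H'_def
      by (rule pcb_transform[OF pcb NT T])
         (auto simp: eT intro: phimat_inj[OF _ i0(1) w'i0] phimat_surj[OF _ i0(1) w'i0])
    have colT: "col (constp T) j = (if j = i0 then map_vec (\<lambda>a. [:a:]) w else unit_vec k j)" if j: "j < k" for j
      using j w i0 unfolding T_def phimat_def constp_def by (intro eq_vecI) (auto simp: unit_vec_def)
    have colH: "col H' j = ?NT *\<^sub>v col (constp T) j" if "j < k" for j
      unfolding H'_def using NT T that by simp
    have cd_i0: "col_deg H' i0 \<le> d - 1"
    proof -
      have "col_deg H' i0 = vec_deg (?NT *\<^sub>v map_vec (\<lambda>a. [:a:]) w)"
        unfolding col_deg_def using colH[OF i0(1)] colT[OF i0(1)] by simp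
      also have "\<dots> \<le> d - 1" unfolding vec_deg_le_iff
      proof (intro allI impI)
        fix j assume "j < dim_vec (?NT *\<^sub>v map_vec (\<lambda>a. [:a:]) w)"
        hence j: "j < c" using N by simp
        from key[OF w wz j] show "degree ((?NT *\<^sub>v map_vec (\<lambda>a. [:a:]) w) $ j) \<le> d - 1"
          using degree_le_pred d0 by blast
      qed
      finally show ?thesis .
    qed
    have cd_other: "col_deg H' j = col_deg ?NT j" if j: "j < k" "j \<noteq> i0" for j
    proof -
      have "?NT *\<^sub>v unit_vec k j = col ?NT j"
      proof (rule eq_vecI)
        fix l assume "l < dim_vec (col ?NT j)"
        hence l: "l < c" using N by simp
        have "row ?NT l \<in> carrier_vec k" using N l by simp
        thus "(?NT *\<^sub>v unit_vec k j) $ l = col ?NT j $ l" using l j N by simp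
      qed (use N in simp)
      thus ?thesis unfolding col_deg_def using colH[OF j(1)] colT[OF j(1)] j by simp
    qed
    have cdNT: "col_deg ?NT j = d" if "j < k" for j
      using col_deg_transpose[of j N] rd that N by simp
    have "(\<Sum>j<k. col_deg H' j) < (\<Sum>j<k. col_deg ?NT j)"
    proof (rule sum_strict_mono_ex1)
      show "\<forall>j\<in>{..<k}. col_deg H' j \<le> col_deg ?NT j"
      proof
        fix j assume "j \<in> {..<k}"
        hence j: "j < k" by simp
        show "col_deg H' j \<le> col_deg ?NT j"
        proof (cases "j = i0")
          case True thus ?thesis using cd_i0 cdNT[OF j] by simp
        next
          case False thus ?thesis using cd_other[OF j False] by simp
        qed
      qed
      show "\<exists>j\<in>{..<k}. col_deg H' j < col_deg ?NT j"
        using cd_i0 cdNT i0 d0 by (intro bexI[of _ i0]) auto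
    qed simp
    moreover have "(\<Sum>j<k. col_deg ?NT j) \<le> (\<Sum>j<k. col_deg H' j)"
      using mini[OF pcb'] H' by simp
    ultimately show False by simp
  qed
qed

lemma predictable_degree:
  fixes N :: "'a::field poly mat"
  assumes N: "N \<in> carrier_mat k c" and mb: "minimal_basis N" and rd: "\<forall>i<k. row_deg N i = d"
    and w: "w \<in> carrier_vec k" and wn: "w \<noteq> 0\<^sub>v k"
  shows "vec_deg (transpose_mat N *\<^sub>v w) = d + vec_deg w"
proof (rule antisym)
  let ?NT = "transpose_mat N"
  have NT: "?NT \<in> carrier_mat c k" using N by simp
  have "mat_deg ?NT \<le> d" unfolding mat_deg_le_iff using row_deg_entries[OF N rd] N by auto
  thus "vec_deg (?NT *\<^sub>v w) \<le> d + vec_deg w" using vec_deg_mult[OF NT w] by simp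
  let ?e = "vec_deg w"
  let ?Nl = "mat k c (\<lambda>(i,j). coeff (N $$ (i,j)) d)"
  let ?wl = "vec k (\<lambda>i. coeff (w $ i) ?e)"
  obtain i where i: "i < k" "w $ i \<noteq> 0" "degree (w $ i) = ?e"
    using vec_deg_attained[of w] w wn by auto
  have "?wl \<noteq> 0\<^sub>v k"
  proof
    assume "?wl = 0\<^sub>v k"
    hence "?wl $ i = 0" using i by simp
    hence "coeff (w $ i) ?e = 0" using i by simp
    hence "coeff (w $ i) (degree (w $ i)) = 0" using i by simp
    hence "w $ i = 0" by (rule leading_coeff_0_iff[THEN iffD1])
    with i show False by simp
  qed
  hence "transpose_mat ?Nl *\<^sub>v ?wl \<noteq> 0\<^sub>v c" using PD_lead[OF N mb rd, of ?wl] by auto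
  moreover have "transpose_mat ?Nl *\<^sub>v ?wl \<in> carrier_vec c" by (rule mult_mat_vec_carrier[of _ c k]) auto
  ultimately have "\<not> (\<forall>j<c. (transpose_mat ?Nl *\<^sub>v ?wl) $ j = 0)"
  proof (intro notI)
    assume ne: "transpose_mat ?Nl *\<^sub>v ?wl \<noteq> 0\<^sub>v c" and cv: "transpose_mat ?Nl *\<^sub>v ?wl \<in> carrier_vec c"
      and a: "\<forall>j<c. (transpose_mat ?Nl *\<^sub>v ?wl) $ j = 0"
    have "transpose_mat ?Nl *\<^sub>v ?wl = 0\<^sub>v c" using a cv by (intro eq_vecI) auto
    with ne show False by simp
  qed
  then obtain j where j: "j < c" "(transpose_mat ?Nl *\<^sub>v ?wl) $ j \<noteq> 0" by auto
  have "coeff ((?NT *\<^sub>v w) $ j) (d + ?e) = (\<Sum>t<k. coeff (N $$ (t,j) * w $ t) (d + ?e))"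
    using mult_vec_entry[OF NT w j(1)] N j by (simp add: coeff_sum)
  also have "\<dots> = (\<Sum>t<k. coeff (N $$ (t,j)) d * coeff (w $ t) ?e)"
    by (rule sum.cong, simp, rule coeff_mult_top, use row_deg_entries[OF N rd] j in auto,
        rule degree_le_vec_deg, use w in auto)
  also have "\<dots> = (transpose_mat ?Nl *\<^sub>v ?wl) $ j"
    using mult_vec_entry[of "transpose_mat ?Nl" c k ?wl j] j by (auto intro: sum.cong)
  finally have "coeff ((?NT *\<^sub>v w) $ j) (d + ?e) \<noteq> 0" using j by simp
  hence "d + ?e \<le> degree ((?NT *\<^sub>v w) $ j)" by (rule le_degree)
  also have "\<dots> \<le> vec_deg (?NT *\<^sub>v w)" using j NT w by (intro degree_le_vec_deg) simp
  finally show "d + vec_deg w \<le> vec_deg (?NT *\<^sub>v w)" .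
qed

lemma vec_deg_zero[simp]: "vec_deg (0\<^sub>v n :: 'a::zero poly vec) = 0"
  using vec_deg_le_iff[of "0\<^sub>v n :: 'a poly vec" 0] by simp

lemma mat_deg_rows:
  fixes N :: "'a::field poly mat"
  assumes N: "N \<in> carrier_mat k c" and k: "k > 0" and rd: "\<forall>i<k. row_deg N i = d"
  shows "mat_deg N = d"
proof (rule antisym)
  show "mat_deg N \<le> d" unfolding mat_deg_le_iff using row_deg_entries[OF N rd] N by auto
  show "d \<le> mat_deg N"
  proof (cases "d = 0")
    case False
    have r0: "vec_deg (row N 0) = d" using rd k unfolding row_deg_def by auto
    hence "row N 0 \<noteq> 0\<^sub>v (dim_vec (row N 0))" using False by auto
    from vec_deg_attained[OF this] obtain j where j: "j < dim_vec (row N 0)" "degree (row N 0 $ j) = d"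
      using r0 by auto
    thus ?thesis using degree_le_mat_deg[of 0 N j] N k by auto
  qed simp
qed

lemma det_deg_le: fixes B :: "'a::field poly mat"
  assumes B: "B \<in> carrier_mat k k" and deg: "\<And>i j. i < k \<Longrightarrow> j < k \<Longrightarrow> degree (B $$ (i,j)) \<le> 1"
  shows "degree (det B) \<le> k"
proof -
  have "det B = (\<Sum>p \<in> {p. p permutes {0..<k}}. signof p * (\<Prod>i = 0..<k. B $$ (i, p i)))"
    by (rule det_def'[OF B])
  also have "degree \<dots> \<le> k"
  proof (rule degree_sum_le)
    show "finite {p. p permutes {0..<k}}" by (rule finite_permutations) simp
    fix p assume "p \<in> {p. p permutes {0..<k}}"
    hence p: "p permutes {0..<k}" by simp
    have "degree (signof p * (\<Prod>i = 0..<k. B $$ (i, p i))) = degree (\<Prod>i = 0..<k. B $$ (i, p i))"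
      by (rule degree_signof_mult)
    also have "\<dots> \<le> sum (degree \<circ> (\<lambda>i. B $$ (i, p i))) {0..<k}" by (rule degree_prod_sum_le) simp
    also have "\<dots> \<le> sum (\<lambda>i. 1) {0..<k}"
    proof (rule sum_mono)
      fix i assume i: "i \<in> {0..<k}"
      hence "p i < k" using p by (meson atLeastLessThan_iff permutes_in_image)
      thus "(degree \<circ> (\<lambda>i. B $$ (i, p i))) i \<le> 1" using deg i by simp
    qed
    also have "\<dots> = k" by simp
    finally show "degree (signof p * (\<Prod>i = 0..<k. B $$ (i, p i))) \<le> k" .
  qed
  finally show ?thesis .
qed

lemma adj_deg_le: fixes L :: "'a::field poly mat"
  assumes L: "L \<in> carrier_mat n n" and deg: "\<And>i j. i < n \<Longrightarrow> j < n \<Longrightarrow> degree (L $$ (i,j)) \<le> 1"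
  shows "mat_deg (adj_mat L) \<le> n - 1"
  unfolding mat_deg_le_iff
proof (intro allI impI)
  fix i j assume i: "i < dim_row (adj_mat L)" and j: "j < dim_col (adj_mat L)"
  hence ij: "i < n" "j < n" using adj_mat(1)[OF L] by auto
  have "adj_mat L $$ (i,j) = (-1)^(j+i) * det (mat_delete L j i)"
    using ij L unfolding adj_mat_def cofactor_def by simp
  also have "degree \<dots> \<le> degree (det (mat_delete L j i))"
  proof -
    have "degree ((-1)^(j+i) :: 'a poly) = 0" by (cases "even (j+i)") auto
    thus ?thesis using degree_mult_le[of "(-1)^(j+i) :: 'a poly" "det (mat_delete L j i)"] by simp
  qed
  also have "\<dots> \<le> n - 1"
  proof (rule det_deg_le)
    show "mat_delete L j i \<in> carrier_mat (n-1) (n-1)" by (rule mat_delete_carrier[OF L])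
    fix a b assume ab: "a < n - 1" "b < n - 1"
    show "degree (mat_delete L j i $$ (a,b)) \<le> 1"
      using ab L deg[of a b] deg[of a "Suc b"] deg[of "Suc a" b] deg[of "Suc a" "Suc b"]
      unfolding mat_delete_def by auto
  qed
  finally show "degree (adj_mat L $$ (i,j)) \<le> n - 1" .
qed

lemma embp_smult: "embp (c \<cdot>\<^sub>m X) = Fract c 1 \<cdot>\<^sub>m embp (X :: 'a::field poly mat)"
  unfolding embp_def by (intro eq_matI) auto

lemma inv_smult_cancel: "(c::'b::field) \<noteq> 0 \<Longrightarrow> inverse c \<cdot>\<^sub>m (c \<cdot>\<^sub>m 1\<^sub>m n) = 1\<^sub>m n"
  by (intro eq_matI) auto

lemma smult_mat_vec: "A \<in> carrier_mat n k \<Longrightarrow> v \<in> carrier_vec k \<Longrightarrow>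
   (c \<cdot>\<^sub>m A) *\<^sub>v v = (c::'b::field) \<cdot>\<^sub>v (A *\<^sub>v v)"
  by (intro eq_vecI) (auto simp: scalar_prod_def sum_distrib_left mult.assoc)

lemma mult_inv_eq: "(c::'b::field) \<noteq> 0 \<Longrightarrow> x = inverse c * y \<Longrightarrow> c * x = y"
  by simp

lemma fract_eq_1: "Fract (x::'a::field poly) 1 = Fract y 1 \<Longrightarrow> x = y"
  by (simp add: eq_fract)

lemma resolvent_formula:
  fixes A :: "'a::field mat"
  assumes A: "A \<in> carrier_mat n n"
  defines "L0 \<equiv> mat n n (\<lambda>(i,j). [:- (A $$ (i,j)), (if i = j then 1 else 0):])"
  shows "resolvent A = inverse (Fract (det L0) 1) \<cdot>\<^sub>m embp (adj_mat L0)"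
    "degree (det L0) = n" "det L0 \<noteq> 0"
    "mat_deg (adj_mat L0) \<le> n - 1" "adj_mat L0 \<in> carrier_mat n n"
proof -
  have L0: "L0 \<in> carrier_mat n n" unfolding L0_def by simp
  have cpm: "L0 = char_poly_matrix A" unfolding L0_def char_poly_matrix_def using A
    by (intro eq_matI) auto
  have dm: "degree (det L0) = n \<and> coeff (det L0) n = 1"
    using degree_monic_char_poly[OF A] unfolding char_poly_def cpm .
  thus "degree (det L0) = n" by simp
  from dm show chi0: "det L0 \<noteq> 0" by auto
  show "mat_deg (adj_mat L0) \<le> n - 1"
    by (rule adj_deg_le[OF L0]) (auto simp: L0_def)
  show adjc: "adj_mat L0 \<in> carrier_mat n n" by (rule adj_mat(1)[OF L0])
  let ?c = "Fract (det L0) 1"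
  have c0: "?c \<noteq> 0" using chi0 fr.hom_0_iff by blast
  let ?R = "inverse ?c \<cdot>\<^sub>m embp (adj_mat L0)"
  have lam: "lamI_minus A = embp L0" unfolding lamI_minus_def L0_def using A by simp
  have eL: "embp L0 \<in> carrier_mat n n" using L0 by simp
  have R: "?R \<in> carrier_mat n n" using adjc by simp
  have e1: "embp L0 * embp (adj_mat L0) = ?c \<cdot>\<^sub>m 1\<^sub>m n"
  proof -
    have "embp L0 * embp (adj_mat L0) = embp (L0 * adj_mat L0)" by (rule embp_mult[OF L0 adjc, symmetric])
    also have "\<dots> = embp (det L0 \<cdot>\<^sub>m 1\<^sub>m n)" using adj_mat(2)[OF L0] by simp
    also have "\<dots> = ?c \<cdot>\<^sub>m 1\<^sub>m n" by (simp add: embp_smult)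
    finally show ?thesis .
  qed
  have e2: "embp (adj_mat L0) * embp L0 = ?c \<cdot>\<^sub>m 1\<^sub>m n"
  proof -
    have "embp (adj_mat L0) * embp L0 = embp (adj_mat L0 * L0)" by (rule embp_mult[OF adjc L0, symmetric])
    also have "\<dots> = embp (det L0 \<cdot>\<^sub>m 1\<^sub>m n)" using adj_mat(3)[OF L0] by simp
    also have "\<dots> = ?c \<cdot>\<^sub>m 1\<^sub>m n" by (simp add: embp_smult)
    finally show ?thesis .
  qed
  have LR: "embp L0 * ?R = 1\<^sub>m n"
  proof -
    have "embp L0 * ?R = inverse ?c \<cdot>\<^sub>m (embp L0 * embp (adj_mat L0))"
      using eL adjc by (simp add: mult_smult_distrib[of _ n n _ n])
    also have "\<dots> = 1\<^sub>m n" unfolding e1 using c0 by (rule inv_smult_cancel)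
    finally show ?thesis .
  qed
  have RL: "?R * embp L0 = 1\<^sub>m n"
  proof -
    have "?R * embp L0 = inverse ?c \<cdot>\<^sub>m (embp (adj_mat L0) * embp L0)"
      using eL adjc by (simp add: mult_smult_assoc_mat[of _ n n _ n])
    also have "\<dots> = 1\<^sub>m n" unfolding e2 using c0 by (rule inv_smult_cancel)
    finally show ?thesis .
  qed
  have "mat_inverse (embp L0) \<noteq> None"
  proof
    assume "mat_inverse (embp L0) = None"
    from mat_inverse(1)[OF eL this, of "()"] have "embp L0 \<notin> Units (ring_mat TYPE('a rat_fun) n ())" .
    moreover have "embp L0 \<in> Units (ring_mat TYPE('a rat_fun) n ())"
      unfolding Units_def ring_mat_def using eL R LR RL by auto
    ultimately show False by simp
  qed
  then obtain R' where R': "mat_inverse (embp L0) = Some R'" by auto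
  from mat_inverse(2)[OF eL R'] have R'c: "R' \<in> carrier_mat n n" and R'L: "R' * embp L0 = 1\<^sub>m n" by auto
  have "R' = R' * (embp L0 * ?R)" using LR R'c by simp
  also have "\<dots> = (R' * embp L0) * ?R" using R'c eL R by simp
  also have "\<dots> = ?R" unfolding R'L by (rule left_mult_one_mat[OF R])
  finally have "R' = ?R" .
  thus "resolvent A = ?R" unfolding resolvent_def lam R' by simp
qed

lemma resolvent_bound:
  fixes A :: "'a::field mat"
  assumes A: "A \<in> carrier_mat n n" and B: "B \<in> carrier_mat n m" and C: "C \<in> carrier_mat p n"
    and hp: "hp \<in> carrier_vec m" and q: "q \<in> carrier_vec p"
    and eq: "embpv q = state_space A B C *\<^sub>v embpv hp"
  shows "vec_deg q \<le> vec_deg hp"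
proof -
  define L0 where "L0 = mat n n (\<lambda>(i,j). [:- (A $$ (i,j)), (if i = j then 1 else 0):])"
  note rf = resolvent_formula[OF A, folded L0_def]
  let ?chi = "det L0"
  let ?Ad = "adj_mat L0"
  let ?c = "Fract ?chi 1"
  have Ad: "?Ad \<in> carrier_mat n n" by (rule rf(5))
  define Y where "Y = constp C * ?Ad * constp B"
  have Y: "Y \<in> carrier_mat p m" unfolding Y_def using C B Ad by simp
  have degY: "mat_deg Y \<le> n - 1"
  proof -
    have "mat_deg Y \<le> mat_deg (constp C * ?Ad) + mat_deg (constp B)"
      unfolding Y_def by (rule mat_deg_mult[of _ p n _ m]) (use C Ad B in auto)
    also have "mat_deg (constp C * ?Ad) \<le> mat_deg (constp C) + mat_deg ?Ad"
      by (rule mat_deg_mult[of _ p n _ n]) (use C Ad in auto)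
    finally show ?thesis using rf(4) by simp
  qed
  have S: "state_space A B C = inverse ?c \<cdot>\<^sub>m embp Y"
  proof -
    have eC: "embc C \<in> carrier_mat p n" and eB: "embc B \<in> carrier_mat n m" using B C by auto
    have eAd: "embp ?Ad \<in> carrier_mat n n" using Ad by simp
    have "state_space A B C = embc C * (inverse ?c \<cdot>\<^sub>m embp ?Ad) * embc B"
      unfolding state_space_def rf(1) ..
    also have "\<dots> = inverse ?c \<cdot>\<^sub>m (embc C * embp ?Ad * embc B)"
      using eC eB eAd by (simp add: mult_smult_distrib[of _ p n _ n] mult_smult_assoc_mat[of _ p n _ m])
    also have "embc C * embp ?Ad * embc B = embp Y"
    proof -
      have cC: "constp C \<in> carrier_mat p n" and cB: "constp B \<in> carrier_mat n m" using C B by auto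
      have "embp Y = embp (constp C * ?Ad) * embp (constp B)"
        unfolding Y_def by (rule embp_mult[of _ p n _ m]) (use cC Ad cB in auto)
      also have "embp (constp C * ?Ad) = embp (constp C) * embp ?Ad" by (rule embp_mult[OF cC Ad])
      finally show ?thesis unfolding embc_def by simp
    qed
    finally show ?thesis .
  qed
  have "embpv q = inverse ?c \<cdot>\<^sub>v embpv (Y *\<^sub>v hp)"
    unfolding eq S embp_mult_vec[OF Y hp] by (rule smult_mat_vec) (use Y hp in auto)
  hence qi: "?chi * q $ i = (Y *\<^sub>v hp) $ i" if i: "i < p" for i
  proof -
    assume h: "embpv q = inverse ?c \<cdot>\<^sub>v embpv (Y *\<^sub>v hp)"
    have "embpv q $ i = (inverse ?c \<cdot>\<^sub>v embpv (Y *\<^sub>v hp)) $ i" using h by simp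
    hence "Fract (q $ i) 1 = inverse ?c * Fract ((Y *\<^sub>v hp) $ i) 1"
      using i q Y hp by (simp add: embpv_index)
    hence "?c * Fract (q $ i) 1 = Fract ((Y *\<^sub>v hp) $ i) 1"
      by (rule mult_inv_eq[rotated]) (use rf(3) fr.hom_0_iff in blast)
    hence "Fract (?chi * q $ i) 1 = Fract ((Y *\<^sub>v hp) $ i) 1" by simp
    thus ?thesis by (rule fract_eq_1)
  qed
  show ?thesis unfolding vec_deg_le_iff
  proof (intro allI impI)
    fix i assume "i < dim_vec q"
    hence i: "i < p" using q by simp
    show "degree (q $ i) \<le> vec_deg hp"
    proof (cases "q $ i = 0")
      case False
      have "n + degree (q $ i) = degree (?chi * q $ i)"
        using degree_mult_eq[OF rf(3) False] rf(2) by simp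
      also have "\<dots> = degree ((Y *\<^sub>v hp) $ i)" using qi[OF i] by simp
      also have "\<dots> \<le> vec_deg (Y *\<^sub>v hp)" using i Y hp by (intro degree_le_vec_deg) simp
      also have "\<dots> \<le> mat_deg Y + vec_deg hp" by (rule vec_deg_mult[OF Y hp])
      finally show ?thesis using degY by linarith
    qed simp
  qed
qed

lemma mvz: "A \<in> carrier_mat n k \<Longrightarrow> A *\<^sub>v 0\<^sub>v k = (0\<^sub>v n :: 'b::field vec)"
  by (intro eq_vecI) auto
lemma zmv: "v \<in> carrier_vec k \<Longrightarrow> 0\<^sub>m n k *\<^sub>v v = (0\<^sub>v n :: 'b::field vec)"
  by (intro eq_vecI) auto
lemma mv_neg: "A \<in> carrier_mat n k \<Longrightarrow> v \<in> carrier_vec k \<Longrightarrow> A *\<^sub>v (- v) = - (A *\<^sub>v (v :: 'b::field vec))"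
  by (intro eq_vecI) (auto simp: scalar_prod_def sum_negf)
lemma vec_first_app: "a \<in> carrier_vec n \<Longrightarrow> vec_first (a @\<^sub>v b) n = a"
  unfolding vec_first_def by (intro eq_vecI) auto
lemma zero_app: "0\<^sub>v (n + k) = (0\<^sub>v n @\<^sub>v 0\<^sub>v k :: 'b::zero vec)"
  by (intro eq_vecI) auto

lemma assoc3: assumes "A \<in> carrier_mat n1 n2" "B \<in> carrier_mat n2 n3" "C \<in> carrier_mat n3 n4" "v \<in> carrier_vec n4"
  shows "(A * B * C) *\<^sub>v v = A *\<^sub>v (B *\<^sub>v (C *\<^sub>v (v :: 'b::field vec)))"
proof -
  have "(A * B * C) *\<^sub>v v = (A * B) *\<^sub>v (C *\<^sub>v v)" by (rule assoc_mult_mat_vec) (use assms in auto)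
  also have "\<dots> = A *\<^sub>v (B *\<^sub>v (C *\<^sub>v v))" by (rule assoc_mult_mat_vec) (use assms in auto)
  finally show ?thesis .
qed

lemma core:
  fixes K1 N1T Kh1 Nh1T K2T N2 Kh2T Nh2 M S :: "'b::field mat"
  assumes K1: "K1 \<in> carrier_mat mh (m+mh)" and N1T: "N1T \<in> carrier_mat (m+mh) m"
    and Kh1: "Kh1 \<in> carrier_mat m (m+mh)" and Nh1T: "Nh1T \<in> carrier_mat (m+mh) mh"
    and K2T: "K2T \<in> carrier_mat (p+ph) ph" and N2: "N2 \<in> carrier_mat p (p+ph)"
    and Kh2T: "Kh2T \<in> carrier_mat (p+ph) p" and Nh2: "Nh2 \<in> carrier_mat ph (p+ph)"
    and M: "M \<in> carrier_mat (p+ph) (m+mh)" and S: "S \<in> carrier_mat p m"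
    and i1: "K1 * N1T = 0\<^sub>m mh m" and i2: "Kh1 * N1T = 1\<^sub>m m"
    and i3: "Nh1T * K1 + N1T * Kh1 = 1\<^sub>m (m+mh)"
    and i4: "N2 * K2T = 0\<^sub>m p ph" and i5: "Nh2 * K2T = 1\<^sub>m ph" and i6: "N2 * Kh2T = 1\<^sub>m p"
    and i7: "Nh2 * Kh2T = 0\<^sub>m ph p" and i8: "K2T * Nh2 + Kh2T * N2 = 1\<^sub>m (p+ph)"
  defines "G \<equiv> N2 * M * N1T + S"
    and "Gh \<equiv> four_block_mat (M + Kh2T * S * Kh1) K2T K1 (0\<^sub>m mh ph)"
    and "Z \<equiv> N1T @\<^sub>r (- (Nh2 * M * N1T))"
  shows "\<And>h. h \<in> carrier_vec m \<Longrightarrow> G *\<^sub>v h = 0\<^sub>v p \<Longrightarrow> Gh *\<^sub>v (Z *\<^sub>v h) = 0\<^sub>v (p+ph+mh)"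
    and "\<And>z. z \<in> carrier_vec (m+mh+ph) \<Longrightarrow> Gh *\<^sub>v z = 0\<^sub>v (p+ph+mh) \<Longrightarrow>
           (\<exists>h \<in> carrier_vec m. G *\<^sub>v h = 0\<^sub>v p \<and> z = Z *\<^sub>v h)"
    and "\<And>h. h \<in> carrier_vec m \<Longrightarrow> Kh1 *\<^sub>v vec_first (Z *\<^sub>v h) (m+mh) = h"
    and "Z \<in> carrier_mat (m+mh+ph) m" "G \<in> carrier_mat p m" "Gh \<in> carrier_mat (p+ph+mh) (m+mh+ph)"
proof -
  have X11: "M + Kh2T * S * Kh1 \<in> carrier_mat (p+ph) (m+mh)" using M Kh2T S Kh1 by simp
  have Z: "Z \<in> carrier_mat (m+mh+ph) m" unfolding Z_def using N1T Nh2 M by simp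
  thus "Z \<in> carrier_mat (m+mh+ph) m" .
  show Gc: "G \<in> carrier_mat p m" unfolding G_def using N2 M N1T S by simp
  show "Gh \<in> carrier_mat (p+ph+mh) (m+mh+ph)" unfolding Gh_def using X11 K2T K1 by simp
  have Zh: "Z *\<^sub>v h = (N1T *\<^sub>v h) @\<^sub>v (- (Nh2 *\<^sub>v (M *\<^sub>v (N1T *\<^sub>v h))))" if h: "h \<in> carrier_vec m" for h
  proof -
    have "Z *\<^sub>v h = (N1T *\<^sub>v h) @\<^sub>v ((- (Nh2 * M * N1T)) *\<^sub>v h)"
      unfolding Z_def by (rule mat_mult_append[OF N1T _ h, of _ ph]) (use Nh2 M N1T in simp)
    also have "(- (Nh2 * M * N1T)) *\<^sub>v h = - ((Nh2 * M * N1T) *\<^sub>v h)"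
      using h Nh2 M N1T by (intro uminus_mult_mat_vec) simp
    also have "(Nh2 * M * N1T) *\<^sub>v h = Nh2 *\<^sub>v (M *\<^sub>v (N1T *\<^sub>v h))"
      by (rule assoc3[OF Nh2 M N1T h])
    finally show ?thesis .
  qed
  have X11x: "(M + Kh2T * S * Kh1) *\<^sub>v x = M *\<^sub>v x + Kh2T *\<^sub>v (S *\<^sub>v (Kh1 *\<^sub>v x))"
    if x: "x \<in> carrier_vec (m+mh)" for x
  proof -
    have "(M + Kh2T * S * Kh1) *\<^sub>v x = M *\<^sub>v x + (Kh2T * S * Kh1) *\<^sub>v x"
      by (rule add_mult_distrib_mat_vec[OF M _ x]) (use Kh2T S Kh1 in simp)
    also have "(Kh2T * S * Kh1) *\<^sub>v x = Kh2T *\<^sub>v (S *\<^sub>v (Kh1 *\<^sub>v x))"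
      by (rule assoc3[OF Kh2T S Kh1 x])
    finally show ?thesis .
  qed
  have Ghv: "Gh *\<^sub>v (x @\<^sub>v y) = ((M + Kh2T * S * Kh1) *\<^sub>v x + K2T *\<^sub>v y) @\<^sub>v (K1 *\<^sub>v x)"
    if x: "x \<in> carrier_vec (m+mh)" and y: "y \<in> carrier_vec ph" for x y
  proof -
    have "Gh *\<^sub>v (x @\<^sub>v y) = ((M + Kh2T * S * Kh1) *\<^sub>v x + K2T *\<^sub>v y) @\<^sub>v (K1 *\<^sub>v x + 0\<^sub>m mh ph *\<^sub>v y)"
      unfolding Gh_def by (rule four_block_mat_mult_vec[OF X11 K2T K1 _ x y]) simp
    also have "K1 *\<^sub>v x + 0\<^sub>m mh ph *\<^sub>v y = K1 *\<^sub>v x" using K1 x y zmv[OF y] by simp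
    finally show ?thesis .
  qed
  have Gv: "G *\<^sub>v h = N2 *\<^sub>v (M *\<^sub>v (N1T *\<^sub>v h)) + S *\<^sub>v h" if h: "h \<in> carrier_vec m" for h
  proof -
    have "G *\<^sub>v h = (N2 * M * N1T) *\<^sub>v h + S *\<^sub>v h"
      unfolding G_def by (rule add_mult_distrib_mat_vec[OF _ S h]) (use N2 M N1T in simp)
    also have "(N2 * M * N1T) *\<^sub>v h = N2 *\<^sub>v (M *\<^sub>v (N1T *\<^sub>v h))"
      by (rule assoc3[OF N2 M N1T h])
    finally show ?thesis .
  qed
  show "Gh *\<^sub>v (Z *\<^sub>v h) = 0\<^sub>v (p+ph+mh)" if h: "h \<in> carrier_vec m" and Gh0: "G *\<^sub>v h = 0\<^sub>v p" for h
  proof -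
    define x where "x = N1T *\<^sub>v h"
    define v where "v = M *\<^sub>v x"
    define w where "w = Nh2 *\<^sub>v v"
    have x: "x \<in> carrier_vec (m+mh)" unfolding x_def using N1T h by simp
    have v: "v \<in> carrier_vec (p+ph)" unfolding v_def using M x by simp
    have w: "w \<in> carrier_vec ph" unfolding w_def using Nh2 v by simp
    have K1x: "K1 *\<^sub>v x = 0\<^sub>v mh" unfolding x_def
      using assoc_mult_mat_vec[OF K1 N1T h, symmetric] i1 zmv[OF h] by simp
    have Kh1x: "Kh1 *\<^sub>v x = h" unfolding x_def
      using assoc_mult_mat_vec[OF Kh1 N1T h, symmetric] i2 h by simp
    have F1: "(M + Kh2T * S * Kh1) *\<^sub>v x = v + Kh2T *\<^sub>v (S *\<^sub>v h)"
      using X11x[OF x] Kh1x v_def by simp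
    have "v = (K2T * Nh2 + Kh2T * N2) *\<^sub>v v" using i8 v by simp
    also have "\<dots> = (K2T * Nh2) *\<^sub>v v + (Kh2T * N2) *\<^sub>v v"
      by (rule add_mult_distrib_mat_vec[of _ "p+ph" "p+ph" _ v]) (use K2T Nh2 Kh2T N2 v in simp)+
    also have "\<dots> = K2T *\<^sub>v w + Kh2T *\<^sub>v (N2 *\<^sub>v v)"
      unfolding w_def using assoc_mult_mat_vec[OF K2T Nh2 v] assoc_mult_mat_vec[OF Kh2T N2 v] by simp
    finally have F2': "v = K2T *\<^sub>v w + Kh2T *\<^sub>v (N2 *\<^sub>v v)" .
    have "Kh2T *\<^sub>v (S *\<^sub>v h) + Kh2T *\<^sub>v (N2 *\<^sub>v v) = Kh2T *\<^sub>v (S *\<^sub>v h + N2 *\<^sub>v v)"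
      by (rule mult_add_distrib_mat_vec[OF Kh2T, symmetric]) (use S h N2 v in simp)+
    also have "S *\<^sub>v h + N2 *\<^sub>v v = G *\<^sub>v h" using Gv[OF h] unfolding v_def x_def
      using S h N2 M N1T by (intro eq_vecI) auto
    also have "Kh2T *\<^sub>v \<dots> = 0\<^sub>v (p+ph)" using Gh0 mvz[OF Kh2T] by simp
    finally have F3: "Kh2T *\<^sub>v (S *\<^sub>v h) + Kh2T *\<^sub>v (N2 *\<^sub>v v) = 0\<^sub>v (p+ph)" .
    have top: "(M + Kh2T * S * Kh1) *\<^sub>v x + K2T *\<^sub>v (- w) = 0\<^sub>v (p+ph)"
    proof (rule eq_vecI)
      fix i assume "i < dim_vec (0\<^sub>v (p+ph) :: 'b vec)"
      hence i: "i < p + ph" by simp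
      have a: "v $ i = (K2T *\<^sub>v w) $ i + (Kh2T *\<^sub>v (N2 *\<^sub>v v)) $ i"
        using arg_cong[OF F2', of "\<lambda>u. u $ i"] i K2T Kh2T by simp
      have b: "(Kh2T *\<^sub>v (S *\<^sub>v h)) $ i + (Kh2T *\<^sub>v (N2 *\<^sub>v v)) $ i = 0"
        using arg_cong[OF F3, of "\<lambda>u. u $ i"] i Kh2T by simp
      show "((M + Kh2T * S * Kh1) *\<^sub>v x + K2T *\<^sub>v (- w)) $ i = 0\<^sub>v (p+ph) $ i"
        unfolding F1 mv_neg[OF K2T w] using i v K2T Kh2T a b by (simp add: algebra_simps)
    qed (use K2T in simp)
    have "Z *\<^sub>v h = x @\<^sub>v (- w)" unfolding Zh[OF h] x_def v_def w_def ..
    hence "Gh *\<^sub>v (Z *\<^sub>v h) = 0\<^sub>v (p+ph) @\<^sub>v 0\<^sub>v mh" using Ghv[OF x, of "- w"] w top K1x by simp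
    thus ?thesis by (simp only: zero_app)
  qed
  show "Kh1 *\<^sub>v vec_first (Z *\<^sub>v h) (m+mh) = h" if h: "h \<in> carrier_vec m" for h
    unfolding Zh[OF h] using vec_first_app[of "N1T *\<^sub>v h"] N1T h
      assoc_mult_mat_vec[OF Kh1 N1T h, symmetric] i2 by simp
  show "\<exists>h \<in> carrier_vec m. G *\<^sub>v h = 0\<^sub>v p \<and> z = Z *\<^sub>v h"
    if z: "z \<in> carrier_vec (m+mh+ph)" and Gz: "Gh *\<^sub>v z = 0\<^sub>v (p+ph+mh)" for z
  proof -
    define x where "x = vec_first z (m+mh)"
    define y where "y = vec_last z ph"
    have x: "x \<in> carrier_vec (m+mh)" and y: "y \<in> carrier_vec ph" unfolding x_def y_def by auto
    have zxy: "z = x @\<^sub>v y" unfolding x_def y_def using z by simp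
    have top: "(M + Kh2T * S * Kh1) *\<^sub>v x + K2T *\<^sub>v y \<in> carrier_vec (p+ph)" using X11 K2T x y by simp
    from Gz have "((M + Kh2T * S * Kh1) *\<^sub>v x + K2T *\<^sub>v y) @\<^sub>v (K1 *\<^sub>v x) = 0\<^sub>v (p+ph) @\<^sub>v 0\<^sub>v mh"
      unfolding zxy Ghv[OF x y] zero_app[of "p+ph" mh] .
    hence E1: "(M + Kh2T * S * Kh1) *\<^sub>v x + K2T *\<^sub>v y = 0\<^sub>v (p+ph)" and E2: "K1 *\<^sub>v x = 0\<^sub>v mh"
      using append_vec_eq[OF top, of "0\<^sub>v (p+ph)"] by auto
    define h where "h = Kh1 *\<^sub>v x"
    have h: "h \<in> carrier_vec m" unfolding h_def using Kh1 x by simp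
    have xh: "x = N1T *\<^sub>v h"
    proof -
      have "x = (Nh1T * K1 + N1T * Kh1) *\<^sub>v x" using i3 x by simp
      also have "\<dots> = (Nh1T * K1) *\<^sub>v x + (N1T * Kh1) *\<^sub>v x"
        by (rule add_mult_distrib_mat_vec[of _ "m+mh" "m+mh" _ x]) (use Nh1T K1 N1T Kh1 x in simp)+
      also have "\<dots> = Nh1T *\<^sub>v (K1 *\<^sub>v x) + N1T *\<^sub>v h"
        unfolding h_def using assoc_mult_mat_vec[OF Nh1T K1 x] assoc_mult_mat_vec[OF N1T Kh1 x] by simp
      also have "Nh1T *\<^sub>v (K1 *\<^sub>v x) = 0\<^sub>v (m+mh)" unfolding E2 by (rule mvz[OF Nh1T])
      finally show ?thesis using N1T h by simp
    qed
    have Sh: "S *\<^sub>v h \<in> carrier_vec p" using S h by simp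
    have Mx: "M *\<^sub>v x \<in> carrier_vec (p+ph)" using M x by simp
    have E1': "M *\<^sub>v x + Kh2T *\<^sub>v (S *\<^sub>v h) + K2T *\<^sub>v y = 0\<^sub>v (p+ph)"
      using E1 X11x[OF x] h_def by simp
    have "N2 *\<^sub>v (M *\<^sub>v x + Kh2T *\<^sub>v (S *\<^sub>v h) + K2T *\<^sub>v y) = 0\<^sub>v p" unfolding E1' by (rule mvz[OF N2])
    moreover have "N2 *\<^sub>v (M *\<^sub>v x + Kh2T *\<^sub>v (S *\<^sub>v h) + K2T *\<^sub>v y)
       = N2 *\<^sub>v (M *\<^sub>v x) + N2 *\<^sub>v (Kh2T *\<^sub>v (S *\<^sub>v h)) + N2 *\<^sub>v (K2T *\<^sub>v y)"
      using N2 Mx Kh2T Sh K2T y by (simp add: mult_add_distrib_mat_vec[of _ p "p+ph"] assoc_add_vec[of _ p])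
    moreover have "N2 *\<^sub>v (Kh2T *\<^sub>v (S *\<^sub>v h)) = S *\<^sub>v h"
      using assoc_mult_mat_vec[OF N2 Kh2T Sh, symmetric] i6 Sh by simp
    moreover have "N2 *\<^sub>v (K2T *\<^sub>v y) = 0\<^sub>v p"
      using assoc_mult_mat_vec[OF N2 K2T y, symmetric] i4 zmv[OF y] by simp
    ultimately have "N2 *\<^sub>v (M *\<^sub>v x) + S *\<^sub>v h + 0\<^sub>v p = 0\<^sub>v p" by simp
    hence Gh0: "G *\<^sub>v h = 0\<^sub>v p" unfolding Gv[OF h] xh[symmetric] using N2 Mx Sh by simp
    have "Nh2 *\<^sub>v (M *\<^sub>v x + Kh2T *\<^sub>v (S *\<^sub>v h) + K2T *\<^sub>v y) = 0\<^sub>v ph" unfolding E1' by (rule mvz[OF Nh2])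
    moreover have "Nh2 *\<^sub>v (M *\<^sub>v x + Kh2T *\<^sub>v (S *\<^sub>v h) + K2T *\<^sub>v y)
       = Nh2 *\<^sub>v (M *\<^sub>v x) + Nh2 *\<^sub>v (Kh2T *\<^sub>v (S *\<^sub>v h)) + Nh2 *\<^sub>v (K2T *\<^sub>v y)"
      using Nh2 Mx Kh2T Sh K2T y by (simp add: mult_add_distrib_mat_vec[of _ ph "p+ph"] assoc_add_vec[of _ ph])
    moreover have "Nh2 *\<^sub>v (Kh2T *\<^sub>v (S *\<^sub>v h)) = 0\<^sub>v ph"
      using assoc_mult_mat_vec[OF Nh2 Kh2T Sh, symmetric] i7 zmv[OF Sh] by simp
    moreover have "Nh2 *\<^sub>v (K2T *\<^sub>v y) = y"
      using assoc_mult_mat_vec[OF Nh2 K2T y, symmetric] i5 y by simp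
    ultimately have "Nh2 *\<^sub>v (M *\<^sub>v x) + 0\<^sub>v ph + y = 0\<^sub>v ph" by simp
    hence eqy: "Nh2 *\<^sub>v (M *\<^sub>v x) + 0\<^sub>v ph + y = 0\<^sub>v ph" .
    have yv: "y = - (Nh2 *\<^sub>v (M *\<^sub>v x))"
    proof (rule eq_vecI)
      fix i assume "i < dim_vec (- (Nh2 *\<^sub>v (M *\<^sub>v x)))"
      hence i: "i < ph" using Nh2 by simp
      have "(Nh2 *\<^sub>v (M *\<^sub>v x) + 0\<^sub>v ph + y) $ i = 0\<^sub>v ph $ i" using eqy by simp
      hence "(Nh2 *\<^sub>v (M *\<^sub>v x)) $ i + y $ i = 0" using i Nh2 y by simp
      thus "y $ i = (- (Nh2 *\<^sub>v (M *\<^sub>v x))) $ i" using i Nh2 by (simp add: eq_neg_iff_add_eq_0 add.commute)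
    qed (use y Nh2 in simp)
    have "z = Z *\<^sub>v h" unfolding zxy Zh[OF h] xh[symmetric] yv ..
    with h Gh0 show ?thesis by blast
  qed
qed

lemma mult_unit_col: fixes A :: "'b::comm_ring_1 mat" assumes A: "A \<in> carrier_mat n k" and j: "j < k" shows "A *\<^sub>v unit_vec k j = col A (j :: nat)"
proof (rule eq_vecI)
  fix i assume "i < dim_vec (col A j)"
  hence i: "i < n" using A by simp
  have "row A i \<bullet> unit_vec k j = row A i $ j" by (rule scalar_prod_right_unit[OF j])
  thus "(A *\<^sub>v unit_vec k j) $ i = col A j $ i" using A i j by simp
qed (use A in simp)

lemma pcb_col_nonzero: assumes "poly_col_basis d H V" "j < dim_col H"
  shows "col H j \<noteq> 0\<^sub>v (dim_row H)" "embpv (col H j) \<in> V"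
proof -
  have H: "H \<in> carrier_mat (dim_row H) (dim_col H)" by auto
  have e: "embpv (col H j) = embp H *\<^sub>v unit_vec (dim_col H) j"
    using mult_unit_col[of "embp H" "dim_row H" "dim_col H" j] assms(2) embp_col[OF assms(2)] by simp
  from assms(1) have ind: "\<And>c. c \<in> carrier_vec (dim_col H) \<Longrightarrow> embp H *\<^sub>v c = 0\<^sub>v d \<Longrightarrow> c = 0\<^sub>v (dim_col H)"
    and V: "V = {embp H *\<^sub>v c | c. c \<in> carrier_vec (dim_col H)}" and d: "dim_row H = d"
    unfolding poly_col_basis_def by auto
  show "embpv (col H j) \<in> V" unfolding V e by auto
  show "col H j \<noteq> 0\<^sub>v (dim_row H)"
  proof
    assume "col H j = 0\<^sub>v (dim_row H)"
    hence "embp H *\<^sub>v unit_vec (dim_col H) j = 0\<^sub>v d" using e d by simp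
    hence "unit_vec (dim_col H) j = (0\<^sub>v (dim_col H) :: 'a rat_fun vec)" by (intro ind) auto
    hence "unit_vec (dim_col H) j $ j = (0\<^sub>v (dim_col H) :: 'a rat_fun vec) $ j" by simp
    thus False using assms(2) by simp
  qed
qed

lemma basis_count:
  fixes H1 H2 :: "'a::field poly mat"
  assumes b1: "poly_col_basis d H1 V" and b2: "poly_col_basis d H2 V"
  shows "dim_col H1 \<le> dim_col H2"
proof (rule ccontr)
  assume "\<not> ?thesis"
  hence lt: "dim_col H2 < dim_col H1" by simp
  define l1 where "l1 = dim_col H1"
  define l2 where "l2 = dim_col H2"
  from b1 have ind: "\<And>c. c \<in> carrier_vec l1 \<Longrightarrow> embp H1 *\<^sub>v c = 0\<^sub>v d \<Longrightarrow> c = 0\<^sub>v l1"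
    and V1: "V = {embp H1 *\<^sub>v c | c. c \<in> carrier_vec l1}" and d1: "dim_row H1 = d"
    unfolding poly_col_basis_def l1_def by auto
  from b2 have V2: "V = {embp H2 *\<^sub>v c | c. c \<in> carrier_vec l2}" and d2: "dim_row H2 = d"
    unfolding poly_col_basis_def l2_def by auto
  have H1: "embp H1 \<in> carrier_mat d l1" using d1 unfolding l1_def by auto
  have H2: "embp H2 \<in> carrier_mat d l2" using d2 unfolding l2_def by auto
  have "\<forall>j. \<exists>c. j < l1 \<longrightarrow> c \<in> carrier_vec l2 \<and> embp H2 *\<^sub>v c = col (embp H1) j"
  proof (intro allI)
    fix j
    show "\<exists>c. j < l1 \<longrightarrow> c \<in> carrier_vec l2 \<and> embp H2 *\<^sub>v c = col (embp H1) j"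
    proof (cases "j < l1")
      case True
      have "col (embp H1) j = embp H1 *\<^sub>v unit_vec l1 j" using mult_unit_col[OF H1 True] by simp
      hence "col (embp H1) j \<in> V" unfolding V1 by auto
      thus ?thesis unfolding V2 by auto
    qed simp
  qed
  then obtain f where f: "\<And>j. j < l1 \<Longrightarrow> f j \<in> carrier_vec l2 \<and> embp H2 *\<^sub>v f j = col (embp H1) j"
    by metis
  define X where "X = mat l2 l1 (\<lambda>(i,j). f j $ i)"
  have X: "X \<in> carrier_mat l2 l1" unfolding X_def by simp
  have colX: "col X j = f j" if "j < l1" for j
    unfolding X_def using f[OF that] that by (intro eq_vecI) auto
  have HX: "embp H2 * X = embp H1"
  proof (rule mat_col_eqI)
    fix j assume "j < dim_col (embp H1)"
    hence j: "j < l1" using H1 by simp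
    show "col (embp H2 * X) j = col (embp H1) j" using col_mult2[OF H2 X j] colX[OF j] f[OF j] by simp
  qed (use H1 H2 X in auto)
  define X0 where "X0 = X @\<^sub>r 0\<^sub>m (l1 - l2) l1"
  have "X0 \<in> carrier_mat (l2 + (l1 - l2)) l1" unfolding X0_def by (rule carrier_append_rows[OF X]) simp
  hence X0: "X0 \<in> carrier_mat l1 l1" using lt unfolding l1_def l2_def by simp
  have "det X0 = 0"
  proof -
    have "X0 = mat\<^sub>r l1 l1 (\<lambda>i. if i = l1 - 1 then 0\<^sub>v l1 else row X0 i)"
    proof (rule eq_matI)
      fix i j assume ij: "i < dim_row (mat\<^sub>r l1 l1 (\<lambda>i. if i = l1 - 1 then 0\<^sub>v l1 else row X0 i))"
        "j < dim_col (mat\<^sub>r l1 l1 (\<lambda>i. if i = l1 - 1 then 0\<^sub>v l1 else row X0 i))"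
      hence i: "i < l1" and j: "j < l1" by auto
      show "X0 $$ (i,j) = mat\<^sub>r l1 l1 (\<lambda>i. if i = l1 - 1 then 0\<^sub>v l1 else row X0 i) $$ (i,j)"
      proof (cases "i = l1 - 1")
        case True
        hence "\<not> i < l2" using lt unfolding l1_def l2_def by auto
        thus ?thesis using True i j X lt unfolding X0_def append_rows_def by auto
      next
        case False thus ?thesis using i j X0 by auto
      qed
    qed (use X0 in auto)
    also have "det \<dots> = 0" by (rule det_row_0) (use lt X0 l1_def l2_def in auto)
    finally show ?thesis .
  qed
  then obtain v where v: "v \<in> carrier_vec l1" "v \<noteq> 0\<^sub>v l1" "X0 *\<^sub>v v = 0\<^sub>v l1"
    using det_0_iff_vec_prod_zero_field[OF X0] by blast
  have "X0 *\<^sub>v v = (X *\<^sub>v v) @\<^sub>v (0\<^sub>m (l1 - l2) l1 *\<^sub>v v)"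
    unfolding X0_def by (rule mat_mult_append[OF X _ v(1), of _ "l1 - l2"]) simp
  moreover have z0: "0\<^sub>v l1 = (0\<^sub>v l2 @\<^sub>v 0\<^sub>v (l1 - l2) :: 'a rat_fun vec)"
    using zero_app[of l2 "l1 - l2"] lt unfolding l1_def l2_def by simp
  ultimately have "(X *\<^sub>v v) @\<^sub>v (0\<^sub>m (l1 - l2) l1 *\<^sub>v v) = 0\<^sub>v l2 @\<^sub>v 0\<^sub>v (l1 - l2)"
    using v(3) by simp
  hence Xv: "X *\<^sub>v v = 0\<^sub>v l2" using append_vec_eq[of "X *\<^sub>v v" l2 "0\<^sub>v l2"] X v by auto
  have "embp H1 *\<^sub>v v = embp H2 *\<^sub>v (X *\<^sub>v v)" unfolding HX[symmetric] using H2 X v by simp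
  also have "\<dots> = 0\<^sub>v d" unfolding Xv by (rule mvz[OF H2])
  finally have "v = 0\<^sub>v l1" using ind v by simp
  with v show False by simp
qed

lemma assoc3p: assumes "A \<in> carrier_mat n1 n2" "B \<in> carrier_mat n2 n3" "C \<in> carrier_mat n3 n4" "v \<in> carrier_vec n4"
  shows "(A * B * C) *\<^sub>v v = A *\<^sub>v (B *\<^sub>v (C *\<^sub>v (v :: 'b::comm_ring_1 vec)))"
proof -
  have "(A * B * C) *\<^sub>v v = (A * B) *\<^sub>v (C *\<^sub>v v)" by (rule assoc_mult_mat_vec) (use assms in auto)
  also have "\<dots> = A *\<^sub>v (B *\<^sub>v (C *\<^sub>v v))" by (rule assoc_mult_mat_vec) (use assms in auto)
  finally show ?thesis .
qed

lemma Zmult: fixes N1T Nh2 M :: "'b::comm_ring_1 mat"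
  assumes N1T: "N1T \<in> carrier_mat a m" and Nh2: "Nh2 \<in> carrier_mat b c" and M: "M \<in> carrier_mat c a"
    and h: "h \<in> carrier_vec m"
  shows "(N1T @\<^sub>r (- (Nh2 * M * N1T))) *\<^sub>v h = (N1T *\<^sub>v h) @\<^sub>v (- (Nh2 *\<^sub>v (M *\<^sub>v (N1T *\<^sub>v h))))"
proof -
  have "(N1T @\<^sub>r (- (Nh2 * M * N1T))) *\<^sub>v h = (N1T *\<^sub>v h) @\<^sub>v ((- (Nh2 * M * N1T)) *\<^sub>v h)"
    by (rule mat_mult_append[OF N1T _ h, of _ b]) (use Nh2 M N1T in simp)
  also have "(- (Nh2 * M * N1T)) *\<^sub>v h = - ((Nh2 * M * N1T) *\<^sub>v h)"
    using h Nh2 M N1T by (intro uminus_mult_mat_vec) simp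
  also have "(Nh2 * M * N1T) *\<^sub>v h = Nh2 *\<^sub>v (M *\<^sub>v (N1T *\<^sub>v h))"
    by (rule assoc3p[OF Nh2 M N1T h])
  finally show ?thesis .
qed

lemma trunc_mult:
  fixes Kh :: "'b::comm_ring_1 mat"
  assumes Kh: "Kh \<in> carrier_mat a b" and z: "z \<in> carrier_vec (b+c)"
  shows "mat a (b+c) (\<lambda>(i,j). if j < b then Kh $$ (i,j) else 0) *\<^sub>v z = Kh *\<^sub>v vec_first z b"
proof (rule eq_vecI)
  fix i assume "i < dim_vec (Kh *\<^sub>v vec_first z b)"
  hence i: "i < a" using Kh by simp
  have "(mat a (b+c) (\<lambda>(i,j). if j < b then Kh $$ (i,j) else 0) *\<^sub>v z) $ i
     = (\<Sum>t<b+c. (if t < b then Kh $$ (i,t) else 0) * z $ t)"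
    by (rule trans[OF mult_vec_entry[of _ a "b+c" z i]]) (use z i in auto)
  also have "\<dots> = (\<Sum>t<b. Kh $$ (i,t) * z $ t)" unfolding sum_split_nat by simp
  also have "\<dots> = (Kh *\<^sub>v vec_first z b) $ i"
    using mult_vec_entry[OF Kh _ i, of "vec_first z b"] by (simp add: vec_first_def)
  finally show "(mat a (b+c) (\<lambda>(i,j). if j < b then Kh $$ (i,j) else 0) *\<^sub>v z) $ i = (Kh *\<^sub>v vec_first z b) $ i" .
qed (use Kh in simp)

lemma sum0_neg: assumes "(x::'b::ab_group_add) + y = 0" shows "y = - x"
proof -
  have "y = - x + (x + y)" by simp
  thus ?thesis using assms by simp
qed

lemma vec_deg_diff: assumes "v = a + b" "a \<in> carrier_vec n" "b \<in> carrier_vec n"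
  shows "vec_deg a \<le> max (vec_deg v) (vec_deg (b :: 'c::comm_ring poly vec))"
proof -
  have "a = v + (- b)" using assms by (intro eq_vecI) auto
  thus ?thesis using vec_deg_add[of v "- b"] assms by simp
qed

theorem lemma6p1:
  fixes G :: "'a::field rat_fun mat" and D :: "'a poly mat"
    and A B C :: "'a mat" and n p m ph mh :: nat
    and K1 K2 N1 N2 M Nh1 Nh2 :: "'a poly mat" and Kh1 Kh2 :: "'a mat"
  assumes G: "G \<in> carrier_mat p m"
    and D: "D \<in> carrier_mat p m"
    and realization: "G = embp D + state_space A B C"
    and minreal: "minimal_realization n p m A B C"
    and degD: "mat_deg D > 1"
    and K1: "K1 \<in> carrier_mat mh (m + mh)" and K2: "K2 \<in> carrier_mat ph (p + ph)"
    and N1: "N1 \<in> carrier_mat m (m + mh)" and N2: "N2 \<in> carrier_mat p (p + ph)"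
    and K1min: "minimal_basis K1" and K2min: "minimal_basis K2"
    and K1deg: "\<forall>i < mh. row_deg K1 i = 1" and K2deg: "\<forall>i < ph. row_deg K2 i = 1"
    and dual1: "dual_minimal_bases K1 N1" and dual2: "dual_minimal_bases K2 N2"
    and N1deg: "\<exists>d. \<forall>i < m. row_deg N1 i = d" and N2deg: "\<exists>d. \<forall>i < p. row_deg N2 i = d"
    and M: "M \<in> carrier_mat (p + ph) (m + mh)" and pencil: "mat_deg M \<le> 1"
    and DM: "D = N2 * M * transpose_mat N1"
    and degDM: "mat_deg D = mat_deg N1 + mat_deg N2 + 1"
    and Kh1: "Kh1 \<in> carrier_mat m (m + mh)" and Kh2: "Kh2 \<in> carrier_mat p (p + ph)"
    and Nh1: "Nh1 \<in> carrier_mat mh (m + mh)" and Nh2: "Nh2 \<in> carrier_mat ph (p + ph)"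
    and U1: "unimodular_with_inverse (K1 @\<^sub>r constp Kh1) (transpose_mat (Nh1 @\<^sub>r N1))"
    and U2: "unimodular_with_inverse (K2 @\<^sub>r constp Kh2) (transpose_mat (Nh2 @\<^sub>r N2))"
  defines "Ghat \<equiv> four_block_mat
              (embp M + embc (transpose_mat Kh2) * state_space A B C * embc Kh1)
              (embp (transpose_mat K2))
              (embp K1)
              (0\<^sub>m mh ph)"
    and "Z \<equiv> transpose_mat N1 @\<^sub>r (- (Nh2 * M * transpose_mat N1))"
  shows "(\<forall>h \<in> rnull G. embp Z *\<^sub>v h \<in> rnull Ghat) \<and>
         (\<forall>hp \<in> carrier_vec m. hp \<noteq> 0\<^sub>v m \<and> embpv hp \<in> rnull G \<longrightarrow>
             (\<exists>zp. embp Z *\<^sub>v embpv hp = embpv zp \<and>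
                   vec_deg zp = vec_deg (transpose_mat N1 *\<^sub>v hp) \<and>
                   vec_deg (transpose_mat N1 *\<^sub>v hp) = mat_deg N1 + vec_deg hp)) \<and>
         (\<forall>H. right_minimal_basis H G \<longrightarrow> right_minimal_basis (Z * H) Ghat)"
proof -
  from minreal have A: "A \<in> carrier_mat n n" and B: "B \<in> carrier_mat n m" and C: "C \<in> carrier_mat p n"
    unfolding minimal_realization_def by auto
  have Rc: "resolvent A \<in> carrier_mat n n" using resolvent_formula(1,5)[OF A] by simp
  let ?S = "state_space A B C"
  have S: "?S \<in> carrier_mat p m" unfolding state_space_def using A B C Rc by simp
  obtain d1 where rd1: "\<forall>i<m. row_deg N1 i = d1" using N1deg by auto
  have mbN1: "minimal_basis N1" using dual1 unfolding dual_minimal_bases_def by auto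
  have cKh1: "constp Kh1 \<in> carrier_mat m (m+mh)" using Kh1 by simp
  have cKh2: "constp Kh2 \<in> carrier_mat p (p+ph)" using Kh2 by simp
  note u1 = unimod_blocks[OF K1 cKh1 Nh1 N1 U1]
  note u2 = unimod_blocks[OF K2 cKh2 Nh2 N2 U2]
  have N1T: "transpose_mat N1 \<in> carrier_mat (m+mh) m" using N1 by simp
  have Nh1T: "transpose_mat Nh1 \<in> carrier_mat (m+mh) mh" using Nh1 by simp
  have K2T: "transpose_mat K2 \<in> carrier_mat (p+ph) ph" using K2 by simp
  have N2T: "transpose_mat N2 \<in> carrier_mat (p+ph) p" using N2 by simp
  have Nh2T: "transpose_mat Nh2 \<in> carrier_mat (p+ph) ph" using Nh2 by simp
  have cKh2T: "transpose_mat (constp Kh2) \<in> carrier_mat (p+ph) p" using Kh2 by simp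
  have p4: "N2 * transpose_mat K2 = 0\<^sub>m p ph"
  proof -
    have "transpose_mat (K2 * transpose_mat N2) = N2 * transpose_mat K2"
      using transpose_mult[OF K2 N2T] by simp
    thus ?thesis using u2(1) by simp
  qed
  have p5: "Nh2 * transpose_mat K2 = 1\<^sub>m ph"
  proof -
    have "transpose_mat (K2 * transpose_mat Nh2) = Nh2 * transpose_mat K2"
      using transpose_mult[OF K2 Nh2T] by simp
    thus ?thesis using u2(2) by simp
  qed
  have p6: "N2 * transpose_mat (constp Kh2) = 1\<^sub>m p"
  proof -
    have "transpose_mat (constp Kh2 * transpose_mat N2) = N2 * transpose_mat (constp Kh2)"
      using transpose_mult[OF cKh2 N2T] by simp
    thus ?thesis using u2(3) by simp
  qed
  have p7: "Nh2 * transpose_mat (constp Kh2) = 0\<^sub>m ph p"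
  proof -
    have "transpose_mat (constp Kh2 * transpose_mat Nh2) = Nh2 * transpose_mat (constp Kh2)"
      using transpose_mult[OF cKh2 Nh2T] by simp
    thus ?thesis using u2(4) by simp
  qed
  have p8: "transpose_mat K2 * Nh2 + transpose_mat (constp Kh2) * N2 = 1\<^sub>m (p+ph)"
  proof -
    have "transpose_mat (transpose_mat Nh2 * K2 + transpose_mat N2 * constp Kh2)
        = transpose_mat (transpose_mat Nh2 * K2) + transpose_mat (transpose_mat N2 * constp Kh2)"
      by (rule transpose_add) (use Nh2T K2 N2T cKh2 in auto)
    also have "transpose_mat (transpose_mat Nh2 * K2) = transpose_mat K2 * Nh2"
      using transpose_mult[OF Nh2T K2] by simp
    also have "transpose_mat (transpose_mat N2 * constp Kh2) = transpose_mat (constp Kh2) * N2"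
      using transpose_mult[OF N2T cKh2] by simp
    finally show ?thesis using u2(5) by simp
  qed
  have eKh1: "embc Kh1 = embp (constp Kh1)" by (simp only: embc_def)
  have eKh2T: "embc (transpose_mat Kh2) = embp (transpose_mat (constp Kh2))"
    by (simp only: embc_def constp_transpose)
  have r1: "embp K1 * embp (transpose_mat N1) = 0\<^sub>m mh m"
    using embp_mult[OF K1 N1T] u1(1) by simp
  have r2: "embc Kh1 * embp (transpose_mat N1) = 1\<^sub>m m"
    using embp_mult[OF cKh1 N1T] u1(3) eKh1 by simp
  have r3: "embp (transpose_mat Nh1) * embp K1 + embp (transpose_mat N1) * embc Kh1 = 1\<^sub>m (m+mh)"
  proof -
    have "embp (transpose_mat Nh1 * K1 + transpose_mat N1 * constp Kh1) = 1\<^sub>m (m+mh)" using u1(5) by simp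
    moreover have "embp (transpose_mat Nh1 * K1 + transpose_mat N1 * constp Kh1)
       = embp (transpose_mat Nh1) * embp K1 + embp (transpose_mat N1) * embc Kh1"
      unfolding eKh1 using Nh1T K1 N1T cKh1
      by (simp add: embp_add[of _ "m+mh" "m+mh"] embp_mult[OF Nh1T K1] embp_mult[OF N1T cKh1])
    ultimately show ?thesis by simp
  qed
  have r4: "embp N2 * embp (transpose_mat K2) = 0\<^sub>m p ph"
    using embp_mult[OF N2 K2T] p4 by simp
  have r5: "embp Nh2 * embp (transpose_mat K2) = 1\<^sub>m ph"
    using embp_mult[OF Nh2 K2T] p5 by simp
  have r6: "embp N2 * embc (transpose_mat Kh2) = 1\<^sub>m p"
    using embp_mult[OF N2 cKh2T] p6 eKh2T by simp
  have r7: "embp Nh2 * embc (transpose_mat Kh2) = 0\<^sub>m ph p"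
    using embp_mult[OF Nh2 cKh2T] p7 eKh2T by simp
  have r8: "embp (transpose_mat K2) * embp Nh2 + embc (transpose_mat Kh2) * embp N2 = 1\<^sub>m (p+ph)"
  proof -
    have "embp (transpose_mat K2 * Nh2 + transpose_mat (constp Kh2) * N2) = 1\<^sub>m (p+ph)" using p8 by simp
    moreover have "embp (transpose_mat K2 * Nh2 + transpose_mat (constp Kh2) * N2)
       = embp (transpose_mat K2) * embp Nh2 + embc (transpose_mat Kh2) * embp N2"
      unfolding eKh2T using K2T Nh2 cKh2T N2
      by (simp add: embp_add[of _ "p+ph" "p+ph"] embp_mult[OF K2T Nh2] embp_mult[OF cKh2T N2])
    ultimately show ?thesis by simp
  qed
  have eK1: "embp K1 \<in> carrier_mat mh (m+mh)" using K1 by simp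
  have eN1T: "embp (transpose_mat N1) \<in> carrier_mat (m+mh) m" using N1 by simp
  have eKh1c: "embc Kh1 \<in> carrier_mat m (m+mh)" using Kh1 by simp
  have eNh1T: "embp (transpose_mat Nh1) \<in> carrier_mat (m+mh) mh" using Nh1 by simp
  have eK2T: "embp (transpose_mat K2) \<in> carrier_mat (p+ph) ph" using K2 by simp
  have eN2: "embp N2 \<in> carrier_mat p (p+ph)" using N2 by simp
  have eKh2Tc: "embc (transpose_mat Kh2) \<in> carrier_mat (p+ph) p" using Kh2 by simp
  have eNh2: "embp Nh2 \<in> carrier_mat ph (p+ph)" using Nh2 by simp
  have eM: "embp M \<in> carrier_mat (p+ph) (m+mh)" using M by simp
  note cr = core[OF eK1 eN1T eKh1c eNh1T eK2T eN2 eKh2Tc eNh2 eM S r1 r2 r3 r4 r5 r6 r7 r8]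
  have GG: "G = embp N2 * embp M * embp (transpose_mat N1) + ?S"
  proof -
    have NM: "N2 * M \<in> carrier_mat p (m+mh)" using N2 M by simp
    have "embp D = embp (N2 * M) * embp (transpose_mat N1)" unfolding DM by (rule embp_mult[OF NM N1T])
    also have "embp (N2 * M) = embp N2 * embp M" by (rule embp_mult[OF N2 M])
    finally show ?thesis unfolding realization by simp
  qed
  have ZZ: "embp Z = embp (transpose_mat N1) @\<^sub>r (- (embp Nh2 * embp M * embp (transpose_mat N1)))"
  proof -
    have NM: "Nh2 * M \<in> carrier_mat ph (m+mh)" using Nh2 M by simp
    have c2: "- (Nh2 * M * transpose_mat N1) \<in> carrier_mat ph m" using NM N1T by simp
    have "embp Z = embp (transpose_mat N1) @\<^sub>r embp (- (Nh2 * M * transpose_mat N1))"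
      unfolding Z_def by (rule embp_append_rows[OF N1T c2])
    also have "embp (- (Nh2 * M * transpose_mat N1)) = - (embp Nh2 * embp M * embp (transpose_mat N1))"
      unfolding embp_uminus embp_mult[OF NM N1T] embp_mult[OF Nh2 M] ..
    finally show ?thesis .
  qed
  have GhatG: "Ghat = four_block_mat (embp M + embc (transpose_mat Kh2) * ?S * embc Kh1)
       (embp (transpose_mat K2)) (embp K1) (0\<^sub>m mh ph)" unfolding Ghat_def ..
  have Zc: "Z \<in> carrier_mat (m+mh+ph) m" unfolding Z_def using N1T Nh2 M by simp
  have eZc: "embp Z \<in> carrier_mat (m+mh+ph) m" using Zc by simp
  have Ghc: "Ghat \<in> carrier_mat (p+ph+mh) (m+mh+ph)" unfolding GhatG by (rule cr(6))
  have rnG: "rnull G = {x \<in> carrier_vec m. G *\<^sub>v x = 0\<^sub>v p}" unfolding rnull_def using G by auto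
  have rnGh: "rnull Ghat = {x \<in> carrier_vec (m+mh+ph). Ghat *\<^sub>v x = 0\<^sub>v (p+ph+mh)}"
    unfolding rnull_def using Ghc by auto
  have C1: "embp Z *\<^sub>v h \<in> rnull Ghat" if "h \<in> rnull G" for h
  proof -
    from that have h: "h \<in> carrier_vec m" and Gh: "G *\<^sub>v h = 0\<^sub>v p" unfolding rnG by auto
    have "Ghat *\<^sub>v (embp Z *\<^sub>v h) = 0\<^sub>v (p+ph+mh)"
      unfolding GhatG ZZ by (rule cr(1)[OF h]) (use Gh GG in simp)
    thus ?thesis unfolding rnGh using eZc h by simp
  qed
  have C2: "\<exists>h \<in> rnull G. z = embp Z *\<^sub>v h" if "z \<in> rnull Ghat" for z
  proof -
    from that have z: "z \<in> carrier_vec (m+mh+ph)" and Gz: "Ghat *\<^sub>v z = 0\<^sub>v (p+ph+mh)" unfolding rnGh by auto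
    from cr(2)[OF z Gz[unfolded GhatG]] obtain h where h: "h \<in> carrier_vec m"
      and "(embp N2 * embp M * embp (transpose_mat N1) + ?S) *\<^sub>v h = 0\<^sub>v p"
      and zh: "z = (embp (transpose_mat N1) @\<^sub>r - (embp Nh2 * embp M * embp (transpose_mat N1))) *\<^sub>v h" by blast
    hence "G *\<^sub>v h = 0\<^sub>v p" using GG by simp
    hence "h \<in> rnull G" unfolding rnG using h by simp
    moreover have "z = embp Z *\<^sub>v h" unfolding ZZ by (rule zh)
    ultimately show ?thesis by blast
  qed
  have C3: "embc Kh1 *\<^sub>v vec_first (embp Z *\<^sub>v h) (m+mh) = h" if "h \<in> carrier_vec m" for h
    unfolding ZZ by (rule cr(3)[OF that])
  have a2: "\<exists>zp. embp Z *\<^sub>v embpv hp = embpv zp \<and>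
                   vec_deg zp = vec_deg (transpose_mat N1 *\<^sub>v hp) \<and>
                   vec_deg (transpose_mat N1 *\<^sub>v hp) = mat_deg N1 + vec_deg hp"
    if hp: "hp \<in> carrier_vec m" and hpn: "hp \<noteq> 0\<^sub>v m" and hpG: "embpv hp \<in> rnull G" for hp
  proof -
    have m0: "m > 0" using hp hpn by (cases m) auto
    have mdN1: "mat_deg N1 = d1" by (rule mat_deg_rows[OF N1 m0 rd1])
    define x1 where "x1 = transpose_mat N1 *\<^sub>v hp"
    define v1 where "v1 = M *\<^sub>v x1"
    define w where "w = Nh2 *\<^sub>v v1"
    have x1: "x1 \<in> carrier_vec (m+mh)" unfolding x1_def using N1T hp by simp
    have v1: "v1 \<in> carrier_vec (p+ph)" unfolding v1_def using M x1 by simp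
    have w: "w \<in> carrier_vec ph" unfolding w_def using Nh2 v1 by simp
    have dx1: "vec_deg x1 = d1 + vec_deg hp" unfolding x1_def by (rule predictable_degree[OF N1 mbN1 rd1 hp hpn])
    have Zhp: "Z *\<^sub>v hp = x1 @\<^sub>v (- w)" unfolding Z_def x1_def v1_def w_def by (rule Zmult[OF N1T Nh2 M hp])
    have eZhp: "embp Z *\<^sub>v embpv hp = embpv (Z *\<^sub>v hp)" by (rule embp_mult_vec[OF Zc hp, symmetric])
    have dw: "vec_deg w \<le> vec_deg x1"
    proof (cases "w = 0\<^sub>v ph")
      case True thus ?thesis by simp
    next
      case False
      have K2w: "vec_deg (transpose_mat K2 *\<^sub>v w) = 1 + vec_deg w"
        by (rule predictable_degree[OF K2 K2min K2deg w False])
      define Dh where "Dh = D *\<^sub>v hp"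
      have Dh: "Dh \<in> carrier_vec p" unfolding Dh_def using D hp by simp
      have DhN: "N2 *\<^sub>v v1 = Dh" unfolding Dh_def DM v1_def x1_def by (rule assoc3p[OF N2 M N1T hp, symmetric])
      \<comment> \<open>strict properness\<close>
      have "embpv (- Dh) = ?S *\<^sub>v embpv hp"
      proof -
        from hpG have "G *\<^sub>v embpv hp = 0\<^sub>v p" unfolding rnG by auto
        hence "embp D *\<^sub>v embpv hp + ?S *\<^sub>v embpv hp = 0\<^sub>v p"
          unfolding realization using D S hp by (simp add: add_mult_distrib_mat_vec[of _ p m])
        moreover have "embp D *\<^sub>v embpv hp = embpv Dh" unfolding Dh_def by (rule embp_mult_vec[OF D hp, symmetric])
        ultimately have e: "embpv Dh + ?S *\<^sub>v embpv hp = 0\<^sub>v p" by simp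
        show ?thesis
        proof (rule eq_vecI)
          fix i assume "i < dim_vec (?S *\<^sub>v embpv hp)"
          hence i: "i < p" using S by simp
          have "(embpv Dh + ?S *\<^sub>v embpv hp) $ i = 0\<^sub>v p $ i" using e by simp
          hence "embpv Dh $ i + (?S *\<^sub>v embpv hp) $ i = 0" using i Dh S by simp
          hence yx: "(?S *\<^sub>v embpv hp) $ i = - (embpv Dh $ i)" by (rule sum0_neg)
          have dd: "dim_vec (embpv Dh) = p" using Dh by simp
          show "embpv (- Dh) $ i = (?S *\<^sub>v embpv hp) $ i"
            unfolding yx embpv_uminus using i dd by simp
        qed (use S Dh in simp)
      qed
      from resolvent_bound[OF A B C hp _ this] Dh have dDh: "vec_deg Dh \<le> vec_deg hp" by simp
      have v1dec: "v1 = transpose_mat K2 *\<^sub>v w + transpose_mat (constp Kh2) *\<^sub>v Dh"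
      proof -
        have "v1 = (transpose_mat K2 * Nh2 + transpose_mat (constp Kh2) * N2) *\<^sub>v v1" using p8 v1 by simp
        also have "\<dots> = (transpose_mat K2 * Nh2) *\<^sub>v v1 + (transpose_mat (constp Kh2) * N2) *\<^sub>v v1"
          by (rule add_mult_distrib_mat_vec[of _ "p+ph" "p+ph" _ v1]) (use K2T Nh2 cKh2T N2 v1 in simp)+
        also have "\<dots> = transpose_mat K2 *\<^sub>v w + transpose_mat (constp Kh2) *\<^sub>v Dh"
          unfolding w_def DhN[symmetric] using assoc_mult_mat_vec[OF K2T Nh2 v1] assoc_mult_mat_vec[OF cKh2T N2 v1] by simp
        finally show ?thesis .
      qed
      have vd1: "vec_deg (transpose_mat K2 *\<^sub>v w) \<le> max (vec_deg v1) (vec_deg (transpose_mat (constp Kh2) *\<^sub>v Dh))"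
        by (rule vec_deg_diff[OF v1dec, where n = "p+ph"]) (use K2T w cKh2T Dh in auto)
      have "vec_deg (M *\<^sub>v x1) \<le> mat_deg M + vec_deg x1" by (rule vec_deg_mult[OF M x1])
      hence vd2: "vec_deg v1 \<le> 1 + vec_deg x1" unfolding v1_def using pencil by linarith
      have md0: "mat_deg (transpose_mat (constp Kh2)) = 0" by (simp only: constp_transpose[symmetric] mat_deg_constp)
      have "vec_deg (transpose_mat (constp Kh2) *\<^sub>v Dh) \<le> mat_deg (transpose_mat (constp Kh2)) + vec_deg Dh"
        by (rule vec_deg_mult[OF cKh2T Dh])
      hence vd3: "vec_deg (transpose_mat (constp Kh2) *\<^sub>v Dh) \<le> vec_deg hp" using md0 dDh by linarith
      have "max (vec_deg v1) (vec_deg (transpose_mat (constp Kh2) *\<^sub>v Dh)) \<le> 1 + vec_deg x1"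
        using vd2 vd3 dx1 by (intro max.boundedI) linarith+
      thus ?thesis using vd1 K2w by linarith
    qed
    have "vec_deg (Z *\<^sub>v hp) = vec_deg x1" unfolding Zhp vec_deg_append using dw by simp
    with eZhp dx1 mdN1 show ?thesis unfolding x1_def by blast
  qed
  have b: "right_minimal_basis (Z * H) Ghat" if rmb: "right_minimal_basis H G" for H
  proof -
    from rmb G have pcbH: "poly_col_basis m H (rnull G)"
      and minH: "\<And>H'. poly_col_basis m H' (rnull G) \<Longrightarrow> (\<Sum>j<dim_col H. col_deg H j) \<le> (\<Sum>j<dim_col H'. col_deg H' j)"
      unfolding right_minimal_basis_def minimal_col_basis_def by auto
    define l where "l = dim_col H"
    from pcbH have Hc: "H \<in> carrier_mat m l" unfolding poly_col_basis_def l_def by auto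
    from pcbH have indH: "\<And>c. c \<in> carrier_vec l \<Longrightarrow> embp H *\<^sub>v c = 0\<^sub>v m \<Longrightarrow> c = 0\<^sub>v l"
      and spanH: "rnull G = {embp H *\<^sub>v c | c. c \<in> carrier_vec l}"
      unfolding poly_col_basis_def l_def by auto
    have ZHc: "Z * H \<in> carrier_mat (m+mh+ph) l" using Zc Hc by simp
    note dZH = carrier_matD[OF ZHc]
    note dHc = carrier_matD[OF Hc]
    have eZH: "embp (Z * H) = embp Z * embp H" by (rule embp_mult[OF Zc Hc])
    have eHc: "embp H \<in> carrier_mat m l" using Hc by simp
    have dcGh: "dim_col Ghat = m+mh+ph" using Ghc by simp
    have pcbZH: "poly_col_basis (m+mh+ph) (Z * H) (rnull Ghat)"
      unfolding poly_col_basis_def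
    proof (intro conjI ballI impI)
      show "dim_row (Z * H) = m + mh + ph" using Zc by simp
    next
      fix c :: "'a rat_fun vec" assume c: "c \<in> carrier_vec (dim_col (Z * H))" and z: "embp (Z * H) *\<^sub>v c = 0\<^sub>v (m+mh+ph)"
      from c have c: "c \<in> carrier_vec l" using ZHc dZH by simp
      have Hcv: "embp H *\<^sub>v c \<in> carrier_vec m" using eHc c by simp
      have "embp Z *\<^sub>v (embp H *\<^sub>v c) = 0\<^sub>v (m+mh+ph)" using z eZH eZc eHc c by simp
      hence "embc Kh1 *\<^sub>v vec_first (0\<^sub>v (m+mh+ph)) (m+mh) = embp H *\<^sub>v c" using C3[OF Hcv] by simp
      moreover have "vec_first (0\<^sub>v (m+mh+ph)) (m+mh) = (0\<^sub>v (m+mh) :: 'a rat_fun vec)"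
        unfolding vec_first_def by (intro eq_vecI) auto
      ultimately have "embp H *\<^sub>v c = 0\<^sub>v m" using mvz[OF eKh1c] by simp
      thus "c = 0\<^sub>v (dim_col (Z * H))" using indH c ZHc dZH by simp
    next
      show "rnull Ghat = {embp (Z * H) *\<^sub>v c |c. c \<in> carrier_vec (dim_col (Z * H))}"
      proof (intro equalityI subsetI)
        fix z assume "z \<in> rnull Ghat"
        from C2[OF this] obtain h where h: "h \<in> rnull G" and zh: "z = embp Z *\<^sub>v h" by blast
        from h obtain c where c: "c \<in> carrier_vec l" and hc: "h = embp H *\<^sub>v c" unfolding spanH by auto
        have "z = embp (Z * H) *\<^sub>v c" unfolding zh hc eZH using eZc eHc c by simp
        with c ZHc dZH show "z \<in> {embp (Z * H) *\<^sub>v c |c. c \<in> carrier_vec (dim_col (Z * H))}" by auto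
      next
        fix z assume "z \<in> {embp (Z * H) *\<^sub>v c |c. c \<in> carrier_vec (dim_col (Z * H))}"
        then obtain c where c: "c \<in> carrier_vec l" and zc: "z = embp (Z * H) *\<^sub>v c" using ZHc dZH by auto
        have "embp H *\<^sub>v c \<in> rnull G" unfolding spanH using c by auto
        from C1[OF this] show "z \<in> rnull Ghat" unfolding zc eZH using eZc eHc c by simp
      qed
    qed
    have colZH: "col_deg (Z * H) j = d1 + col_deg H j" if j: "j < l" for j
    proof -
      have jj: "j < dim_col H" using j unfolding l_def .
      have cj: "col H j \<in> carrier_vec m" by (rule carrier_vecI) (use dHc in simp)
      have nz: "col H j \<noteq> 0\<^sub>v m" using pcb_col_nonzero(1)[OF pcbH jj] dHc by simp
      have inG: "embpv (col H j) \<in> rnull G" by (rule pcb_col_nonzero(2)[OF pcbH jj])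
      have m0: "m > 0"
      proof (rule ccontr)
        assume "\<not> m > 0"
        hence "m = 0" by simp
        hence "col H j = 0\<^sub>v m" using dHc by (intro eq_vecI) auto
        with nz show False by simp
      qed
      from a2[OF cj nz inG] obtain zp where zp: "embp Z *\<^sub>v embpv (col H j) = embpv zp"
        "vec_deg zp = vec_deg (transpose_mat N1 *\<^sub>v col H j)"
        "vec_deg (transpose_mat N1 *\<^sub>v col H j) = mat_deg N1 + vec_deg (col H j)" by blast
      have cZH: "col (Z * H) j = Z *\<^sub>v col H j" by (rule col_mult2[OF Zc Hc j])
      have "embpv (col (Z * H) j) = embp Z *\<^sub>v embpv (col H j)"
        unfolding cZH by (rule embp_mult_vec[OF Zc cj])
      also have "\<dots> = embpv zp" by (rule zp(1))
      finally have "col (Z * H) j = zp" by (rule embpv_inj)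
      hence "vec_deg (col (Z * H) j) = mat_deg N1 + vec_deg (col H j)" using zp(2,3) by simp
      thus ?thesis unfolding col_deg_def mat_deg_rows[OF N1 m0 rd1] .
    qed
    show ?thesis unfolding right_minimal_basis_def minimal_col_basis_def dcGh
    proof (intro conjI allI impI)
      show "poly_col_basis (m+mh+ph) (Z * H) (rnull Ghat)" by (rule pcbZH)
      fix H' assume pcbH': "poly_col_basis (m+mh+ph) H' (rnull Ghat)"
      define l' where "l' = dim_col H'"
      from pcbH' have H'c: "H' \<in> carrier_mat (m+mh+ph) l'" unfolding poly_col_basis_def l'_def by auto
      note dH' = carrier_matD[OF H'c]
      from pcbH' have indH': "\<And>c. c \<in> carrier_vec l' \<Longrightarrow> embp H' *\<^sub>v c = 0\<^sub>v (m+mh+ph) \<Longrightarrow> c = 0\<^sub>v l'"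
        and spanH': "rnull Ghat = {embp H' *\<^sub>v c | c. c \<in> carrier_vec l'}"
        unfolding poly_col_basis_def l'_def by auto
      have eH'c: "embp H' \<in> carrier_mat (m+mh+ph) l'" using H'c by simp
      define Wp where "Wp = mat m (m+mh+ph) (\<lambda>(i,j). if j < m+mh then constp Kh1 $$ (i,j) else 0)"
      have Wpc: "Wp \<in> carrier_mat m (m+mh+ph)" unfolding Wp_def by simp
      have eW: "embp Wp = mat m (m+mh+ph) (\<lambda>(i,j). if j < m+mh then embc Kh1 $$ (i,j) else 0)"
        unfolding Wp_def embc_def embp_def using Kh1 by (intro eq_matI) auto
      have eWc: "embp Wp \<in> carrier_mat m (m+mh+ph)" using Wpc by simp
      have Wz: "embp Wp *\<^sub>v z = embc Kh1 *\<^sub>v vec_first z (m+mh)" if "z \<in> carrier_vec (m+mh+ph)" for z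
        unfolding eW by (rule trunc_mult[OF eKh1c that])
      have WZ: "embp Wp *\<^sub>v (embp Z *\<^sub>v h) = h" if "h \<in> carrier_vec m" for h
        using Wz[of "embp Z *\<^sub>v h"] C3[OF that] eZc that by simp
      have ZW: "embp Z *\<^sub>v (embp Wp *\<^sub>v z) = z" if "z \<in> rnull Ghat" for z
      proof -
        from C2[OF that] obtain h where h: "h \<in> rnull G" and zh: "z = embp Z *\<^sub>v h" by blast
        from h have "h \<in> carrier_vec m" unfolding rnG by auto
        thus ?thesis unfolding zh using WZ by simp
      qed
      define H'' where "H'' = Wp * H'"
      have H''c: "H'' \<in> carrier_mat m l'" unfolding H''_def using Wpc H'c by simp
      note dH'' = carrier_matD[OF H''c]
      have eH'': "embp H'' = embp Wp * embp H'" unfolding H''_def by (rule embp_mult[OF Wpc H'c])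
      have pcbH'': "poly_col_basis m H'' (rnull G)"
        unfolding poly_col_basis_def
      proof (intro conjI ballI impI)
        show "dim_row H'' = m" using H''c dH'' by simp
      next
        fix c :: "'a rat_fun vec" assume c: "c \<in> carrier_vec (dim_col H'')" and z: "embp H'' *\<^sub>v c = 0\<^sub>v m"
        from c have c: "c \<in> carrier_vec l'" using H''c dH'' by simp
        have inGh: "embp H' *\<^sub>v c \<in> rnull Ghat" unfolding spanH' using c by auto
        have "embp Wp *\<^sub>v (embp H' *\<^sub>v c) = 0\<^sub>v m" using z eH'' eWc eH'c c by simp
        hence "embp H' *\<^sub>v c = embp Z *\<^sub>v 0\<^sub>v m" using ZW[OF inGh] by simp
        also have "\<dots> = 0\<^sub>v (m+mh+ph)" by (rule mvz[OF eZc])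
        finally show "c = 0\<^sub>v (dim_col H'')" using indH' c H''c dH'' by simp
      next
        show "rnull G = {embp H'' *\<^sub>v c |c. c \<in> carrier_vec (dim_col H'')}"
        proof (intro equalityI subsetI)
          fix h assume hG: "h \<in> rnull G"
          hence h: "h \<in> carrier_vec m" unfolding rnG by auto
          have "embp Z *\<^sub>v h \<in> rnull Ghat" by (rule C1[OF hG])
          then obtain c where c: "c \<in> carrier_vec l'" and zc: "embp Z *\<^sub>v h = embp H' *\<^sub>v c"
            unfolding spanH' by auto
          have "h = embp Wp *\<^sub>v (embp H' *\<^sub>v c)" using WZ[OF h] zc by simp
          also have "\<dots> = embp H'' *\<^sub>v c" unfolding eH'' using eWc eH'c c by simp
          finally show "h \<in> {embp H'' *\<^sub>v c |c. c \<in> carrier_vec (dim_col H'')}" using c H''c dH'' by auto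
        next
          fix h assume "h \<in> {embp H'' *\<^sub>v c |c. c \<in> carrier_vec (dim_col H'')}"
          then obtain c where c: "c \<in> carrier_vec l'" and hc: "h = embp H'' *\<^sub>v c" using H''c dH'' by auto
          have inGh: "embp H' *\<^sub>v c \<in> rnull Ghat" unfolding spanH' using c by auto
          from C2[OF inGh] obtain h0 where h0: "h0 \<in> rnull G" and e: "embp H' *\<^sub>v c = embp Z *\<^sub>v h0" by blast
          from h0 have h0c: "h0 \<in> carrier_vec m" unfolding rnG by auto
          have "h = embp Wp *\<^sub>v (embp H' *\<^sub>v c)" unfolding hc eH'' using eWc eH'c c by simp
          also have "\<dots> = h0" unfolding e by (rule WZ[OF h0c])
          finally show "h \<in> rnull G" using h0 by simp
        qed
      qed
      have ll: "l \<le> l'"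
        using basis_count[OF pcbH pcbH''] H''c dH'' unfolding l_def by simp
      have sumH: "(\<Sum>j<l. col_deg H j) \<le> (\<Sum>j<l'. col_deg H'' j)"
        using minH[OF pcbH''] H''c dH'' unfolding l_def by simp
      have colH': "d1 + col_deg H'' j \<le> col_deg H' j" if j: "j < l'" for j
      proof -
        have cj: "col H' j \<in> carrier_vec (m+mh+ph)" using H'c dH' j by simp
        have u: "col H'' j \<in> carrier_vec m" using H''c dH'' j by simp
        have inGh: "embpv (col H' j) \<in> rnull Ghat" using pcb_col_nonzero(2)[OF pcbH'] j H'c dH' by simp
        have nz': "col H' j \<noteq> 0\<^sub>v (m+mh+ph)" using pcb_col_nonzero(1)[OF pcbH'] j H'c dH' by simp
        have ecolH'': "embpv (col H'' j) = embp Wp *\<^sub>v embpv (col H' j)"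
          unfolding H''_def using col_mult2[OF Wpc H'c j] embp_mult_vec[OF Wpc cj] by simp
        have "embpv (Z *\<^sub>v col H'' j) = embp Z *\<^sub>v embpv (col H'' j)" by (rule embp_mult_vec[OF Zc u])
        also have "\<dots> = embpv (col H' j)" unfolding ecolH'' by (rule ZW[OF inGh])
        finally have colrel: "col H' j = Z *\<^sub>v col H'' j" by (rule embpv_inj[symmetric])
        have nz: "col H'' j \<noteq> 0\<^sub>v m"
        proof
          assume "col H'' j = 0\<^sub>v m"
          hence "col H' j = Z *\<^sub>v 0\<^sub>v m" using colrel by simp
          also have "\<dots> = 0\<^sub>v (m+mh+ph)" using Zc by (intro eq_vecI) auto
          finally show False using nz' by simp
        qed
        have "Z *\<^sub>v col H'' j = (transpose_mat N1 *\<^sub>v col H'' j) @\<^sub>v (- (Nh2 *\<^sub>v (M *\<^sub>v (transpose_mat N1 *\<^sub>v col H'' j))))"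
          unfolding Z_def by (rule Zmult[OF N1T Nh2 M u])
        hence "vec_deg (transpose_mat N1 *\<^sub>v col H'' j) \<le> vec_deg (Z *\<^sub>v col H'' j)"
          by (simp add: vec_deg_append)
        moreover have "vec_deg (transpose_mat N1 *\<^sub>v col H'' j) = d1 + vec_deg (col H'' j)"
          by (rule predictable_degree[OF N1 mbN1 rd1 u nz])
        ultimately show ?thesis unfolding col_deg_def colrel by simp
      qed
      have "(\<Sum>j<dim_col (Z * H). col_deg (Z * H) j) = (\<Sum>j<l. d1 + col_deg H j)"
        using ZHc dZH colZH by (intro sum.cong) auto
      also have "\<dots> = l * d1 + (\<Sum>j<l. col_deg H j)" by (simp add: sum.distrib)
      also have "\<dots> \<le> l' * d1 + (\<Sum>j<l'. col_deg H'' j)" using ll sumH by (intro add_mono mult_right_mono) auto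
      also have "\<dots> = (\<Sum>j<l'. d1 + col_deg H'' j)" by (simp add: sum.distrib)
      also have "\<dots> \<le> (\<Sum>j<l'. col_deg H' j)" using colH' by (intro sum_mono) auto
      finally show "(\<Sum>j<dim_col (Z * H). col_deg (Z * H) j) \<le> (\<Sum>j<dim_col H'. col_deg H' j)"
        unfolding l'_def .
    qed
  qed
  show ?thesis using C1 a2 b by blast
qed

end
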